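(* Let $\mathbb{X}$ be a reverse differential restriction category (satisfying all of [RD.1]–[RD.9]) with countable disjoint joins. For $g:A\to B$ put $D[g]:=(\iota_0\times 1_A)R[R[g]]\pi_1$, and for $g:A\to A$ put $T(g):=\langle\pi_0 g,D[g]\rangle:A\times A\to A\times A$. Let $f:A\to A$ and let $b_T,b_F:A\to 1$ be maps with $\overline{b_T}\,\overline{b_F}$ nowhere defined. Define $$W:=\bigvee_{i\ge0}(\overline{b_T}f)^i\overline{b_F},\qquad W':=\bigvee_{i\ge0}(\overline{\pi_0b_T}\,T(f))^i\,\overline{\pi_0 b_F},$$ where $h^0=1$ and $h^{i+1}=h\,h^i$. Then $$R[W]=(\iota_0\times 1_A)\,R[W'\pi_1]\,\pi_1 :A\times A\to A,$$ where $\iota_0=\langle 1_A,0\rangle:A\to A\times A$. That is, the reverse derivative of the while-loop is the dagger of the forward-derivative while-loop of the preceding proposition: $[\![v.\mathrm{rd}(x.\texttt{while } b\texttt{ do } f)(a)]\!]$ is obtained by daggering the term $\texttt{let } x=a,y=v\texttt{ in }\mathrm{snd}(\texttt{while }\pi_0b\texttt{ do }(\pi_0f,\mathrm{fd}(x.f)(x).y))$.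
   Context: Composition is written in diagrammatic order: $fg$ means "first $f$, then $g$". A restriction category is a category with an operation sending each $f:A\to B$ to a map $\bar f:A\to A$ such that $\bar f f=f$, $\bar f\bar g=\bar g\bar f$ (for $f,g$ with common domain), $\overline{\bar f g}=\bar f\bar g$, and $f\bar g=\overline{fg}\,f$. A map $f$ is total if $\bar f=1$. For parallel maps: - $f\le g$ means $\bar f g=f$; - a nowhere-defined map $\emptyset$ is a least element for $\le$; - $f,g$ are disjoint if $\bar f g$ is nowhere defined; - the join $\bigvee_i f_i$ of a family is its least upper bound for $\le$. "Countable disjoint joins" means that every countable family of pairwise disjoint parallel maps has a join, and composition preserves such joins on both sides: $h(\bigvee_i f_i)k=\bigvee_i hf_ik$. The category has restriction products if: - there is an object $1$ with a total map $!_A:A\to 1$ for each $A$ such that every $f:A\to1$ equals $\bar f\,!_A$; - for all $A,B$ there is an object $A\times B$ with total maps $\pi_0,\pi_1$ such that for all $f:C\to A$, $g:C\to B$ there is a unique $\langle f,g\rangle$ with $\langle f,g\rangle\pi_0=\bar g f$ and $\langle f,g\rangle\pi_1=\bar f g$. Write $f\times g=\langle\pi_0f,\pi_1g\rangle$. A Cartesian left additive restriction category is a restriction category with restriction products in which every hom-set is a commutative monoid $(+,0)$ such that: - $\overline{f+g}=\bar f\bar g$ and $\bar 0=1$; - $x(f+g)=xf+xg$ and $x0=\bar x 0$; - $(f+g)\pi_i=f\pi_i+g\pi_i$ and $0\pi_i=0$. Write $\iota_0=\langle 1,0\rangle$ and $\iota_1=\langle 0,1\rangle$. A reverse differential restriction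 category (RDRC) is a Cartesian left additive restriction category with an operation sending each $f:A\to B$ to $R[f]:A\times B\to A$ such that: - [RD.1] $R[f+g]=R[f]+R[g]$ and $R[0]=0$. - [RD.2] $\langle a,b+c\rangle R[f]=\langle a,b\rangle R[f]+\langle a,c\rangle R[f]$ and $\langle a,0\rangle R[f]=\overline{af}\,0$. - [RD.3] $R[\pi_j]=\pi_1\iota_j$. - [RD.4] $R[\langle f,g\rangle]=(1\times\pi_0)R[f]+(1\times\pi_1)R[g]$. - [RD.5] $R[fg]=\langle \pi_0,\langle\pi_0 f,\pi_1\rangle R[g]\rangle R[f]$. - [RD.6] $\langle 1\times\pi_0,\,0\times\pi_1\rangle(\iota_0\times 1)R[R[R[f]]]\pi_1=(1\times\pi_1)R[f]$. - [RD.7] With $g:=(\iota_0\times 1)R[R[f]]\pi_1$, one has $(\iota_0\times1)R[R[g]]\pi_1=\mathrm{ex}\,(\iota_0\times 1)R[R[g]]\pi_1$, where $\mathrm{ex}=\langle\pi_0\times\pi_0,\pi_1\times\pi_1\rangle$. - [RD.8] $\overline{R[f]}=\bar f\times 1$. - [RD.9] $R[\bar f]=(\bar f\times 1)\pi_1$. Semantics of the SDPL formulation: - $[\![\texttt{while } b\texttt{ do } f]\!]=\bigvee_{i\ge0}(\overline{b_T}[\![f]\!])^i\overline{b_F}$; - $[\![v.\mathrm{rd}(x.m)(a)]\!]=\langle\langle1,[\![a]\!]\rangle,[\![v]\!]\rangle R[[\![m]\!]]\pi_1$; - the dagger of $g:A\times B\to C$ is $g^{\dagger[A]}:=(\iota_0\times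 1)R[g]\pi_1:A\times C\to B$. *)

theory Defs
  imports Main
begin

text \<open>Composition is
written in diagrammatic order: cmp f g means "first f, then g".  Composition of
non-composable maps is junk and is never constrained.\<close>

record ('o, 'm) rcat =
  c_dom  :: "'m \<Rightarrow> 'o"
  c_cod  :: "'m \<Rightarrow> 'o"
  c_cmp  :: "'m \<Rightarrow> 'm \<Rightarrow> 'm"
  c_id   :: "'o \<Rightarrow> 'm"
  c_rst  :: "'m \<Rightarrow> 'm"
  c_one  :: "'o"
  c_bang :: "'o \<Rightarrow> 'm"
  c_prod :: "'o \<Rightarrow> 'o \<Rightarrow> 'o"
  c_pi0  :: "'o \<Rightarrow> 'o \<Rightarrow> 'm"
  c_pi1  :: "'o \<Rightarrow> 'o \<Rightarrow> 'm"
  c_pair :: "'m \<Rightarrow> 'm \<Rightarrow> 'm"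
  c_plus :: "'m \<Rightarrow> 'm \<Rightarrow> 'm"
  c_zero :: "'o \<Rightarrow> 'o \<Rightarrow> 'm"
  c_R    :: "'m \<Rightarrow> 'm"

definition hom :: "('o,'m) rcat \<Rightarrow> 'o \<Rightarrow> 'o \<Rightarrow> 'm \<Rightarrow> bool" where
  "hom C A B f \<longleftrightarrow> c_dom C f = A \<and> c_cod C f = B"

definition parallel :: "('o,'m) rcat \<Rightarrow> 'm \<Rightarrow> 'm \<Rightarrow> bool" where
  "parallel C f g \<longleftrightarrow> c_dom C f = c_dom C g \<and> c_cod C f = c_cod C g"

definition is_category :: "('o,'m) rcat \<Rightarrow> bool" where
  "is_category C \<longleftrightarrow>
     (\<forall>A. hom C A A (c_id C A)) \<and>
     (\<forall>f g. c_cod C f = c_dom C g \<longrightarrow> hom C (c_dom C f) (c_cod C g) (c_cmp C f g)) \<and>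
     (\<forall>f. c_cmp C (c_id C (c_dom C f)) f = f \<and> c_cmp C f (c_id C (c_cod C f)) = f) \<and>
     (\<forall>f g h. c_cod C f = c_dom C g \<and> c_cod C g = c_dom C h \<longrightarrow>
        c_cmp C (c_cmp C f g) h = c_cmp C f (c_cmp C g h))"

definition is_restriction_category :: "('o,'m) rcat \<Rightarrow> bool" where
  "is_restriction_category C \<longleftrightarrow> is_category C \<and>
     (\<forall>f. hom C (c_dom C f) (c_dom C f) (c_rst C f)) \<and>
     (\<forall>f. c_cmp C (c_rst C f) f = f) \<and>
     (\<forall>f g. c_dom C f = c_dom C g \<longrightarrow>
        c_cmp C (c_rst C f) (c_rst C g) = c_cmp C (c_rst C g) (c_rst C f)) \<and>
     (\<forall>f g. c_dom C f = c_dom C g \<longrightarrow>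
        c_rst C (c_cmp C (c_rst C f) g) = c_cmp C (c_rst C f) (c_rst C g)) \<and>
     (\<forall>f g. c_cod C f = c_dom C g \<longrightarrow>
        c_cmp C f (c_rst C g) = c_cmp C (c_rst C (c_cmp C f g)) f)"

definition total :: "('o,'m) rcat \<Rightarrow> 'm \<Rightarrow> bool" where
  "total C f \<longleftrightarrow> c_rst C f = c_id C (c_dom C f)"

definition rle :: "('o,'m) rcat \<Rightarrow> 'm \<Rightarrow> 'm \<Rightarrow> bool" where
  "rle C f g \<longleftrightarrow> parallel C f g \<and> c_cmp C (c_rst C f) g = f"

definition nowhere_defined :: "('o,'m) rcat \<Rightarrow> 'm \<Rightarrow> bool" where
  "nowhere_defined C f \<longleftrightarrow> (\<forall>g. parallel C f g \<longrightarrow> rle C f g)"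

definition disjoint_maps :: "('o,'m) rcat \<Rightarrow> 'm \<Rightarrow> 'm \<Rightarrow> bool" where
  "disjoint_maps C f g \<longleftrightarrow> parallel C f g \<and> nowhere_defined C (c_cmp C (c_rst C f) g)"

definition is_join :: "('o,'m) rcat \<Rightarrow> 'o \<Rightarrow> 'o \<Rightarrow> nat set \<Rightarrow> (nat \<Rightarrow> 'm) \<Rightarrow> 'm \<Rightarrow> bool" where
  "is_join C A B I fs j \<longleftrightarrow> hom C A B j \<and> (\<forall>i\<in>I. rle C (fs i) j) \<and>
     (\<forall>k. hom C A B k \<and> (\<forall>i\<in>I. rle C (fs i) k) \<longrightarrow> rle C j k)"

definition pairwise_disjoint :: "('o,'m) rcat \<Rightarrow> nat set \<Rightarrow> (nat \<Rightarrow> 'm) \<Rightarrow> bool" where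
  "pairwise_disjoint C I fs \<longleftrightarrow> (\<forall>i\<in>I. \<forall>j\<in>I. i \<noteq> j \<longrightarrow> disjoint_maps C (fs i) (fs j))"

text \<open>Countable disjoint joins: countable families are indexed by subsets of nat (this
covers finite and countably infinite families, including the empty one).\<close>
definition has_countable_disjoint_joins :: "('o,'m) rcat \<Rightarrow> bool" where
  "has_countable_disjoint_joins C \<longleftrightarrow>
     (\<forall>A B I fs. (\<forall>i\<in>I. hom C A B (fs i)) \<and> pairwise_disjoint C I fs \<longrightarrow>
        (\<exists>j. is_join C A B I fs j)) \<and>
     (\<forall>A B X Y I fs j h k. (\<forall>i\<in>I. hom C A B (fs i)) \<and> pairwise_disjoint C I fs \<and>
        is_join C A B I fs j \<and> hom C X A h \<and> hom C B Y k \<longrightarrow>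
        is_join C X Y I (\<lambda>i. c_cmp C (c_cmp C h (fs i)) k) (c_cmp C (c_cmp C h j) k))"

definition has_restriction_products :: "('o,'m) rcat \<Rightarrow> bool" where
  "has_restriction_products C \<longleftrightarrow>
     (\<forall>A. hom C A (c_one C) (c_bang C A) \<and> total C (c_bang C A)) \<and>
     (\<forall>A f. hom C A (c_one C) f \<longrightarrow> f = c_cmp C (c_rst C f) (c_bang C A)) \<and>
     (\<forall>A B. hom C (c_prod C A B) A (c_pi0 C A B) \<and> total C (c_pi0 C A B) \<and>
            hom C (c_prod C A B) B (c_pi1 C A B) \<and> total C (c_pi1 C A B)) \<and>
     (\<forall>X A B f g. hom C X A f \<and> hom C X B g \<longrightarrow>
        hom C X (c_prod C A B) (c_pair C f g) \<and>
        c_cmp C (c_pair C f g) (c_pi0 C A B) = c_cmp C (c_rst C g) f \<and>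
        c_cmp C (c_pair C f g) (c_pi1 C A B) = c_cmp C (c_rst C f) g \<and>
        (\<forall>h. hom C X (c_prod C A B) h \<and>
             c_cmp C h (c_pi0 C A B) = c_cmp C (c_rst C g) f \<and>
             c_cmp C h (c_pi1 C A B) = c_cmp C (c_rst C f) g \<longrightarrow> h = c_pair C f g))"

definition fprod :: "('o,'m) rcat \<Rightarrow> 'm \<Rightarrow> 'm \<Rightarrow> 'm" where
  "fprod C f g = c_pair C (c_cmp C (c_pi0 C (c_dom C f) (c_dom C g)) f)
                          (c_cmp C (c_pi1 C (c_dom C f) (c_dom C g)) g)"

definition iota0 :: "('o,'m) rcat \<Rightarrow> 'o \<Rightarrow> 'o \<Rightarrow> 'm" where
  "iota0 C A B = c_pair C (c_id C A) (c_zero C A B)"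

definition iota1 :: "('o,'m) rcat \<Rightarrow> 'o \<Rightarrow> 'o \<Rightarrow> 'm" where
  "iota1 C A B = c_pair C (c_zero C B A) (c_id C B)"

definition is_cartesian_left_additive :: "('o,'m) rcat \<Rightarrow> bool" where
  "is_cartesian_left_additive C \<longleftrightarrow>
     is_restriction_category C \<and> has_restriction_products C \<and>
     (\<forall>A B f g. hom C A B f \<and> hom C A B g \<longrightarrow> hom C A B (c_plus C f g)) \<and>
     (\<forall>A B. hom C A B (c_zero C A B)) \<and>
     (\<forall>A B f g h. hom C A B f \<and> hom C A B g \<and> hom C A B h \<longrightarrow>
        c_plus C (c_plus C f g) h = c_plus C f (c_plus C g h)) \<and>
     (\<forall>A B f g. hom C A B f \<and> hom C A B g \<longrightarrow> c_plus C f g = c_plus C g f) \<and>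
     (\<forall>A B f. hom C A B f \<longrightarrow> c_plus C f (c_zero C A B) = f) \<and>
     (\<forall>A B f g. hom C A B f \<and> hom C A B g \<longrightarrow>
        c_rst C (c_plus C f g) = c_cmp C (c_rst C f) (c_rst C g)) \<and>
     (\<forall>A B. c_rst C (c_zero C A B) = c_id C A) \<and>
     (\<forall>X A B x f g. hom C X A x \<and> hom C A B f \<and> hom C A B g \<longrightarrow>
        c_cmp C x (c_plus C f g) = c_plus C (c_cmp C x f) (c_cmp C x g)) \<and>
     (\<forall>X A B x. hom C X A x \<longrightarrow>
        c_cmp C x (c_zero C A B) = c_cmp C (c_rst C x) (c_zero C X B)) \<and>
     (\<forall>X A B f g. hom C X (c_prod C A B) f \<and> hom C X (c_prod C A B) g \<longrightarrow>
        c_cmp C (c_plus C f g) (c_pi0 C A B) =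
          c_plus C (c_cmp C f (c_pi0 C A B)) (c_cmp C g (c_pi0 C A B)) \<and>
        c_cmp C (c_plus C f g) (c_pi1 C A B) =
          c_plus C (c_cmp C f (c_pi1 C A B)) (c_cmp C g (c_pi1 C A B))) \<and>
     (\<forall>X A B. c_cmp C (c_zero C X (c_prod C A B)) (c_pi0 C A B) = c_zero C X A \<and>
              c_cmp C (c_zero C X (c_prod C A B)) (c_pi1 C A B) = c_zero C X B)"

definition is_rdrc :: "('o,'m) rcat \<Rightarrow> bool" where
  "is_rdrc C \<longleftrightarrow> is_cartesian_left_additive C \<and>
     (\<forall>A B f. hom C A B f \<longrightarrow> hom C (c_prod C A B) A (c_R C f)) \<and>
     \<comment> \<open>RD.1\<close>
     (\<forall>A B f g. hom C A B f \<and> hom C A B g \<longrightarrow>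
        c_R C (c_plus C f g) = c_plus C (c_R C f) (c_R C g)) \<and>
     (\<forall>A B. c_R C (c_zero C A B) = c_zero C (c_prod C A B) A) \<and>
     \<comment> \<open>RD.2\<close>
     (\<forall>X A B a b c f. hom C X A a \<and> hom C X B b \<and> hom C X B c \<and> hom C A B f \<longrightarrow>
        c_cmp C (c_pair C a (c_plus C b c)) (c_R C f) =
          c_plus C (c_cmp C (c_pair C a b) (c_R C f)) (c_cmp C (c_pair C a c) (c_R C f))) \<and>
     (\<forall>X A B a f. hom C X A a \<and> hom C A B f \<longrightarrow>
        c_cmp C (c_pair C a (c_zero C X B)) (c_R C f) =
          c_cmp C (c_rst C (c_cmp C a f)) (c_zero C X A)) \<and>
     \<comment> \<open>RD.3\<close>
     (\<forall>A B. c_R C (c_pi0 C A B) =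
              c_cmp C (c_pi1 C (c_prod C A B) A) (iota0 C A B) \<and>
            c_R C (c_pi1 C A B) =
              c_cmp C (c_pi1 C (c_prod C A B) B) (iota1 C A B)) \<and>
     \<comment> \<open>RD.4\<close>
     (\<forall>X A B f g. hom C X A f \<and> hom C X B g \<longrightarrow>
        c_R C (c_pair C f g) =
          c_plus C (c_cmp C (fprod C (c_id C X) (c_pi0 C A B)) (c_R C f))
                   (c_cmp C (fprod C (c_id C X) (c_pi1 C A B)) (c_R C g))) \<and>
     \<comment> \<open>RD.5\<close>
     (\<forall>A B D f g. hom C A B f \<and> hom C B D g \<longrightarrow>
        c_R C (c_cmp C f g) =
          c_cmp C (c_pair C (c_pi0 C A D)
                     (c_cmp C (c_pair C (c_cmp C (c_pi0 C A D) f) (c_pi1 C A D)) (c_R C g)))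
                  (c_R C f)) \<and>
     \<comment> \<open>RD.6\<close>
     (\<forall>A B f. hom C A B f \<longrightarrow>
        c_cmp C (c_pair C (fprod C (c_id C A) (c_pi0 C B B))
                          (fprod C (c_zero C A A) (c_pi1 C B B)))
          (c_cmp C (c_cmp C (fprod C (iota0 C (c_prod C A B) A) (c_id C (c_prod C A B)))
                             (c_R C (c_R C (c_R C f))))
                   (c_pi1 C (c_prod C A B) A))
        = c_cmp C (fprod C (c_id C A) (c_pi1 C B B)) (c_R C f)) \<and>
     \<comment> \<open>RD.7\<close>
     (\<forall>A B f. hom C A B f \<longrightarrow>
        (let g = c_cmp C (c_cmp C (fprod C (iota0 C A B) (c_id C A)) (c_R C (c_R C f)))
                         (c_pi1 C A B);
             AA = c_prod C A A;
             h = c_cmp C (c_cmp C (fprod C (iota0 C AA B) (c_id C AA)) (c_R C (c_R C g)))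
                         (c_pi1 C AA B);
             ex = c_pair C (fprod C (c_pi0 C A A) (c_pi0 C A A))
                           (fprod C (c_pi1 C A A) (c_pi1 C A A))
         in h = c_cmp C ex h)) \<and>
     \<comment> \<open>RD.8\<close>
     (\<forall>A B f. hom C A B f \<longrightarrow> c_rst C (c_R C f) = fprod C (c_rst C f) (c_id C B)) \<and>
     \<comment> \<open>RD.9\<close>
     (\<forall>A B f. hom C A B f \<longrightarrow>
        c_R C (c_rst C f) = c_cmp C (fprod C (c_rst C f) (c_id C A)) (c_pi1 C A A))"

primrec mpow :: "('o,'m) rcat \<Rightarrow> 'o \<Rightarrow> 'm \<Rightarrow> nat \<Rightarrow> 'm" where
  "mpow C A h 0 = c_id C A"
| "mpow C A h (Suc i) = c_cmp C h (mpow C A h i)"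

definition fwdD :: "('o,'m) rcat \<Rightarrow> 'o \<Rightarrow> 'o \<Rightarrow> 'm \<Rightarrow> 'm" where
  "fwdD C A B g = c_cmp C (c_cmp C (fprod C (iota0 C A B) (c_id C A)) (c_R C (c_R C g)))
                          (c_pi1 C A B)"

definition tanT :: "('o,'m) rcat \<Rightarrow> 'o \<Rightarrow> 'm \<Rightarrow> 'm" where
  "tanT C A g = c_pair C (c_cmp C (c_pi0 C A A) g) (fwdD C A A g)"

end

theory Submission
  imports Defs
begin

locale RD =
  fixes C :: "('o,'m) rcat"
  assumes rdrc: "is_rdrc C" and cj: "has_countable_disjoint_joins C"
begin

abbreviation dm where "dm \<equiv> c_dom C"
abbreviation cd where "cd \<equiv> c_cod C"
abbreviation cp (infixr ";;" 70) where "f ;; g \<equiv> c_cmp C f g"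
abbreviation rs where "rs \<equiv> c_rst C"
abbreviation idm where "idm \<equiv> c_id C"
abbreviation pr where "pr \<equiv> c_prod C"
abbreviation p0 where "p0 \<equiv> c_pi0 C"
abbreviation p1 where "p1 \<equiv> c_pi1 C"
abbreviation pair where "pair \<equiv> c_pair C"
abbreviation pl (infixl "+++" 65) where "f +++ g \<equiv> c_plus C f g"
abbreviation zr where "zr \<equiv> c_zero C"
abbreviation RR where "RR \<equiv> c_R C"

lemma clar: "is_cartesian_left_additive C" using rdrc unfolding is_rdrc_def by blast
lemma rcat: "is_restriction_category C" using clar unfolding is_cartesian_left_additive_def by blast
lemma cat: "is_category C" using rcat unfolding is_restriction_category_def by blast
lemma prods: "has_restriction_products C" using clar unfolding is_cartesian_left_additive_def by blast

lemma dm_id[simp]: "dm (idm A) = A" and cd_id[simp]: "cd (idm A) = A"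
  using cat unfolding is_category_def hom_def by blast+
lemma dm_cp[simp]: "cd f = dm g \<Longrightarrow> dm (f ;; g) = dm f"
  and cd_cp[simp]: "cd f = dm g \<Longrightarrow> cd (f ;; g) = cd g"
  using cat unfolding is_category_def hom_def by blast+
lemma id_l[simp]: "dm f = A \<Longrightarrow> idm A ;; f = f"
  and id_r[simp]: "cd f = B \<Longrightarrow> f ;; idm B = f"
  using cat unfolding is_category_def by blast+
lemma assoc[simp]: "cd f = dm g \<Longrightarrow> cd g = dm h \<Longrightarrow> (f ;; g) ;; h = f ;; (g ;; h)"
  using cat unfolding is_category_def by blast

lemma dm_rs[simp]: "dm (rs f) = dm f" and cd_rs[simp]: "cd (rs f) = dm f"
  using rcat unfolding is_restriction_category_def hom_def by blast+
lemma rs_self[simp]: "rs f ;; f = f"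
  using rcat unfolding is_restriction_category_def by blast
lemma rs_comm: "dm f = dm g \<Longrightarrow> rs f ;; rs g = rs g ;; rs f"
  using rcat unfolding is_restriction_category_def by blast
lemma rs_R3: "dm f = dm g \<Longrightarrow> rs (rs f ;; g) = rs f ;; rs g"
  using rcat unfolding is_restriction_category_def by blast
lemma rs_R4: "cd f = dm g \<Longrightarrow> f ;; rs g = rs (f ;; g) ;; f"
  using rcat unfolding is_restriction_category_def by blast



lemma assocs: "cd f = dm g \<Longrightarrow> cd g = dm h \<Longrightarrow> f ;; (g ;; h) = (f ;; g) ;; h"
  by simp
lemma rs_self_c[simp]: "cd f = dm h \<Longrightarrow> rs f ;; (f ;; h) = f ;; h"
  by (subst assocs) simp_all

lemma rs_id[simp]: "rs (idm A) = idm A"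
  using rs_self[of "idm A"] id_r[of "rs (idm A)" A] by simp
lemma rs_rs[simp]: "rs (rs f) = rs f"
proof -
  have "rs (rs f ;; idm (dm f)) = rs f ;; rs (idm (dm f))" by (rule rs_R3) simp
  thus ?thesis by simp
qed
lemma rs_idem[simp]: "rs f ;; rs f = rs f"
  using rs_R3[of f f] by simp
lemma rs_idem_c[simp]: "dm h = dm f \<Longrightarrow> rs f ;; (rs f ;; h) = rs f ;; h"
  by (subst assocs) simp_all
lemma rs_cp_rs: "cd f = dm g \<Longrightarrow> rs (f ;; rs g) = rs (f ;; g)"
proof -
  assume a: "cd f = dm g"
  have "rs (f ;; rs g) = rs (rs (f ;; g) ;; f)" using rs_R4[OF a] by simp
  also have "\<dots> = rs (f;;g) ;; rs f" using a by (simp add: rs_R3)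
  also have "\<dots> = rs f ;; rs (f;;g)" using a by (simp add: rs_comm)
  also have "\<dots> = rs (rs f ;; (f ;; g))" using a by (intro rs_R3[symmetric]) simp
  also have "\<dots> = rs (f ;; g)" using a by simp
  finally show ?thesis .
qed
lemma rs_cp_le: "cd f = dm g \<Longrightarrow> rs f ;; rs (f ;; g) = rs (f ;; g)"
proof -
  assume a: "cd f = dm g"
  have "rs (rs f ;; (f ;; g)) = rs f ;; rs (f ;; g)" by (rule rs_R3) (simp add: a)
  thus ?thesis using a by simp
qed
lemma rs_cp_le': "cd f = dm g \<Longrightarrow> rs (f ;; g) ;; rs f = rs (f ;; g)"
  using rs_cp_le[of f g] rs_comm[of f "f ;; g"] by simp
lemma rs_total: "cd f = dm g \<Longrightarrow> rs g = idm (dm g) \<Longrightarrow> rs (f ;; g) = rs f"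
  using rs_cp_rs[of f g] by simp
lemma absorb: "dm e = dm x \<Longrightarrow> rs x ;; rs e = rs x \<Longrightarrow> rs e ;; x = x"
proof -
  assume a: "dm e = dm x" "rs x ;; rs e = rs x"
  have "rs e ;; x = rs e ;; (rs x ;; x)" by simp
  also have "\<dots> = (rs e ;; rs x) ;; x" using a by (subst assocs) simp_all
  also have "rs e ;; rs x = rs x" using a rs_comm[of e x] by simp
  finally show ?thesis by simp
qed
lemma rs_meet: "cd x = dm a \<Longrightarrow> cd x = dm b \<Longrightarrow>
   rs (x ;; rs a) ;; rs (x ;; rs b) = rs (x ;; rs a ;; rs b)"
proof -
  assume a: "cd x = dm a" "cd x = dm b"
  have "rs (x ;; rs a) ;; rs (x ;; rs b) = rs (rs (x ;; rs a) ;; (x ;; rs b))"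
    using a by (simp add: rs_R3)
  also have "rs (x ;; rs a) ;; (x ;; rs b) = (rs (x ;; rs a) ;; x) ;; rs b" using a by simp
  also have "rs (x ;; rs a) ;; x = x ;; rs a" using rs_R4[of x "rs a"] a by simp
  finally show ?thesis using a by simp
qed



lemma rs_lcomm: "dm e = dm f \<Longrightarrow> dm f = dm g \<Longrightarrow> rs e ;; (rs f ;; g) = rs f ;; (rs e ;; g)"
proof -
  assume a: "dm e = dm f" "dm f = dm g"
  have "rs e ;; (rs f ;; g) = (rs e ;; rs f) ;; g" using a by (subst assocs) simp_all
  also have "rs e ;; rs f = rs f ;; rs e" using a by (simp add: rs_comm)
  finally show ?thesis using a by simp
qed

definition sub where "sub x a \<longleftrightarrow> rs x ;; rs a = rs x"

lemma sub_refl[simp]: "sub x x" by (simp add: sub_def)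
lemma sub_trans: "sub x a \<Longrightarrow> sub a b \<Longrightarrow> dm x = dm a \<Longrightarrow> dm a = dm b \<Longrightarrow> sub x b"
  unfolding sub_def proof -
  assume a: "rs x ;; rs a = rs x" "rs a ;; rs b = rs a" "dm x = dm a" "dm a = dm b"
  have "rs x ;; rs b = (rs x ;; rs a) ;; rs b" using a by simp
  also have "\<dots> = rs x ;; (rs a ;; rs b)" using a by (subst assoc) simp_all
  finally show "rs x ;; rs b = rs x" using a by simp
qed
lemma sub_rs[simp]: "sub x (rs a) = sub x a" "sub (rs x) a = sub x a" by (simp_all add: sub_def)
lemma sub_cp: "cd f = dm h \<Longrightarrow> sub (f ;; h) f" unfolding sub_def by (rule rs_cp_le')
lemma sub_absorb: "sub x e \<Longrightarrow> dm e = dm x \<Longrightarrow> rs e ;; x = x"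
  unfolding sub_def by (rule absorb)
lemma sub_absorb_c: "sub x e \<Longrightarrow> dm e = dm x \<Longrightarrow> cd x = dm y \<Longrightarrow> rs e ;; (x ;; y) = x ;; y"
  by (subst assocs) (simp_all add: sub_absorb)
lemma sub_antisym: "sub x y \<Longrightarrow> sub y x \<Longrightarrow> dm x = dm y \<Longrightarrow> rs x = rs y"
  unfolding sub_def using rs_comm[of x y] by simp
lemma sub_meet: "sub x a \<Longrightarrow> sub x b \<Longrightarrow> dm a = dm b \<Longrightarrow> dm x = dm a \<Longrightarrow> sub x (rs a ;; b)"
  unfolding sub_def proof -
  assume a: "rs x ;; rs a = rs x" "rs x ;; rs b = rs x" "dm a = dm b" "dm x = dm a"
  have "rs x ;; rs (rs a ;; b) = rs x ;; (rs a ;; rs b)" using a by (simp add: rs_R3)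
  also have "\<dots> = (rs x ;; rs a) ;; rs b" using a by (subst assocs) simp_all
  finally show "rs x ;; rs (rs a ;; b) = rs x" using a by simp
qed
lemma sub_rs_cp1: "dm e = dm f \<Longrightarrow> sub (rs e ;; f) e"
  unfolding sub_def by (simp add: rs_R3 rs_comm[of f e] flip: assocs)
lemma sub_rs_cp2: "dm e = dm f \<Longrightarrow> sub (rs e ;; f) f"
  unfolding sub_def by (simp add: rs_R3 flip: assocs)
lemma sub_cp_mono: "sub g g' \<Longrightarrow> cd f = dm g \<Longrightarrow> dm g = dm g' \<Longrightarrow> sub (f ;; g) (f ;; g')"
  unfolding sub_def using rs_meet[of f g g'] rs_cp_rs[of f g] rs_cp_rs[of f g'] by simp
lemma sub_rs_eq: "rs x = rs y \<Longrightarrow> sub x a = sub y a" by (simp add: sub_def)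
lemma sub_rs_eq2: "rs a = rs b \<Longrightarrow> sub x a = sub x b" by (simp add: sub_def)
lemma sub_total: "rs a = idm (dm x) \<Longrightarrow> sub x a" by (simp add: sub_def)

end

context RD begin

lemma PA: "\<forall>A B. hom C (c_prod C A B) A (c_pi0 C A B) \<and> total C (c_pi0 C A B) \<and>
            hom C (c_prod C A B) B (c_pi1 C A B) \<and> total C (c_pi1 C A B)"
  using prods[unfolded has_restriction_products_def] by (elim conjE) assumption
lemma PB: "\<forall>X A B f g. hom C X A f \<and> hom C X B g \<longrightarrow>
        hom C X (c_prod C A B) (c_pair C f g) \<and>
        c_cmp C (c_pair C f g) (c_pi0 C A B) = c_cmp C (c_rst C g) f \<and>
        c_cmp C (c_pair C f g) (c_pi1 C A B) = c_cmp C (c_rst C f) g \<and>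
        (\<forall>h. hom C X (c_prod C A B) h \<and>
             c_cmp C h (c_pi0 C A B) = c_cmp C (c_rst C g) f \<and>
             c_cmp C h (c_pi1 C A B) = c_cmp C (c_rst C f) g \<longrightarrow> h = c_pair C f g)"
  using prods[unfolded has_restriction_products_def] by (elim conjE) assumption

lemma p_ty[simp]: "dm (p0 A B) = pr A B" "cd (p0 A B) = A" "dm (p1 A B) = pr A B" "cd (p1 A B) = B"
  using PA unfolding hom_def by simp_all
lemma p_total[simp]: "rs (p0 A B) = idm (pr A B)" "rs (p1 A B) = idm (pr A B)"
  using PA unfolding hom_def total_def by simp_all

lemma PB': "dm f = X \<Longrightarrow> dm g = X \<Longrightarrow> cd f = A \<Longrightarrow> cd g = B \<Longrightarrow>
        dm (pair f g) = X \<and> cd (pair f g) = pr A B \<and>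
        pair f g ;; p0 A B = rs g ;; f \<and>
        pair f g ;; p1 A B = rs f ;; g \<and>
        (\<forall>h. dm h = X \<and> cd h = pr A B \<and>
             h ;; p0 A B = rs g ;; f \<and>
             h ;; p1 A B = rs f ;; g \<longrightarrow> h = pair f g)"
  using PB[rule_format, of X A f B g] unfolding hom_def by simp

lemma pair_ty[simp]: "dm f = dm g \<Longrightarrow> dm (pair f g) = dm f"
  "dm f = dm g \<Longrightarrow> cd (pair f g) = pr (cd f) (cd g)"
  subgoal premises p using conjunct1[OF PB'[of f "dm f" g "cd f" "cd g", OF refl p[symmetric] refl refl]] .
  subgoal premises p using conjunct1[OF conjunct2[OF PB'[of f "dm f" g "cd f" "cd g", OF refl p[symmetric] refl refl]]] .
  done
lemma pair_p0[simp]: "dm f = X \<Longrightarrow> dm g = X \<Longrightarrow> cd f = A \<Longrightarrow> cd g = B \<Longrightarrow> pair f g ;; p0 A B = rs g ;; f"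
  by (drule PB', assumption+, elim conjE)
lemma pair_p1[simp]: "dm f = X \<Longrightarrow> dm g = X \<Longrightarrow> cd f = A \<Longrightarrow> cd g = B \<Longrightarrow> pair f g ;; p1 A B = rs f ;; g"
  by (drule PB', assumption+, elim conjE)
lemma pair_unique: "dm f = X \<Longrightarrow> dm g = X \<Longrightarrow> cd f = A \<Longrightarrow> cd g = B \<Longrightarrow> dm h = X \<Longrightarrow> cd h = pr A B \<Longrightarrow>
   h ;; p0 A B = rs g ;; f \<Longrightarrow> h ;; p1 A B = rs f ;; g \<Longrightarrow> h = pair f g"
  by (drule PB', assumption+, elim conjE allE impE) (intro conjI; assumption)

lemma pair_p0_c[simp]: "dm f = X \<Longrightarrow> dm g = X \<Longrightarrow> cd f = A \<Longrightarrow> cd g = B \<Longrightarrow> dm h = A \<Longrightarrow>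
   pair f g ;; (p0 A B ;; h) = rs g ;; (f ;; h)"
  by (subst assocs) simp_all
lemma pair_p1_c[simp]: "dm f = X \<Longrightarrow> dm g = X \<Longrightarrow> cd f = A \<Longrightarrow> cd g = B \<Longrightarrow> dm h = B \<Longrightarrow>
   pair f g ;; (p1 A B ;; h) = rs f ;; (g ;; h)"
  by (subst assocs) simp_all

lemma rs_pair[simp]: "dm f = dm g \<Longrightarrow> rs (pair f g) = rs f ;; rs g"
proof -
  assume a: "dm f = dm g"
  have "rs (pair f g) = rs (pair f g ;; p0 (cd f) (cd g))"
    using a by (intro rs_total[symmetric]) auto
  also have "\<dots> = rs g ;; rs f" using a by (simp add: rs_R3)
  finally show ?thesis using a by (simp add: rs_comm)
qed

lemma pair_id[simp]: "pair (p0 A B) (p1 A B) = idm (pr A B)"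
  by (rule pair_unique[symmetric]) auto

lemma rs_R4_c: "cd f = dm g \<Longrightarrow> cd f = dm h \<Longrightarrow> f ;; (rs g ;; h) = rs (f ;; g) ;; (f ;; h)"
proof -
  assume a: "cd f = dm g" "cd f = dm h"
  have "f ;; (rs g ;; h) = (f ;; rs g) ;; h" using a by (subst assocs) simp_all
  also have "\<dots> = (rs (f ;; g) ;; f) ;; h" using a by (simp add: rs_R4)
  finally show ?thesis using a by simp
qed

lemma cp_pair: "cd x = Y \<Longrightarrow> dm f = Y \<Longrightarrow> dm g = Y \<Longrightarrow> x ;; pair f g = pair (x ;; f) (x ;; g)"
proof -
  assume a: "cd x = Y" "dm f = Y" "dm g = Y"
  show ?thesis
  proof (rule pair_unique[OF _ _ refl refl])
    show "(x ;; pair f g) ;; p0 (cd (x ;; f)) (cd (x ;; g)) = rs (x ;; g) ;; x ;; f"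
      using a by (simp add: rs_R4_c)
    show "(x ;; pair f g) ;; p1 (cd (x ;; f)) (cd (x ;; g)) = rs (x ;; f) ;; x ;; g"
      using a by (simp add: rs_R4_c)
  qed (use a in auto)
qed

lemma pair_rs_l: "dm e = X \<Longrightarrow> dm f = X \<Longrightarrow> dm g = X \<Longrightarrow> pair (rs e ;; f) g = rs e ;; pair f g"
proof -
  assume a: "dm e = X" "dm f = X" "dm g = X"
  show ?thesis
  proof (rule pair_unique[symmetric, OF _ _ refl refl])
    show "(rs e ;; pair f g) ;; p0 (cd (rs e ;; f)) (cd g) = rs g ;; rs e ;; f"
      using a by (simp add: rs_lcomm)
    show "(rs e ;; pair f g) ;; p1 (cd (rs e ;; f)) (cd g) = rs (rs e ;; f) ;; g"
      using a by (simp add: rs_R3)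
  qed (use a in auto)
qed

lemma pair_rs_r: "dm e = X \<Longrightarrow> dm f = X \<Longrightarrow> dm g = X \<Longrightarrow> pair f (rs e ;; g) = rs e ;; pair f g"
proof -
  assume a: "dm e = X" "dm f = X" "dm g = X"
  show ?thesis
  proof (rule pair_unique[symmetric, OF _ _ refl refl])
    show "(rs e ;; pair f g) ;; p1 (cd f) (cd (rs e ;; g)) = rs f ;; rs e ;; g"
      using a by (simp add: rs_lcomm)
    show "(rs e ;; pair f g) ;; p0 (cd f) (cd (rs e ;; g)) = rs (rs e ;; g) ;; f"
      using a by (simp add: rs_R3 rs_lcomm)
  qed (use a in auto)
qed

lemma sub_pair0: "dm f = dm g \<Longrightarrow> sub (pair f g) f"
  unfolding sub_def by (simp add: rs_comm[of g f] flip: assocs)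
lemma sub_pair1: "dm f = dm g \<Longrightarrow> sub (pair f g) g"
  unfolding sub_def by (simp flip: assocs)
lemma sub_pairI: "dm f = dm g \<Longrightarrow> dm x = dm f \<Longrightarrow> sub x f \<Longrightarrow> sub x g \<Longrightarrow> sub x (pair f g)"
  unfolding sub_def proof -
  assume a: "dm f = dm g" "dm x = dm f" "rs x ;; rs f = rs x" "rs x ;; rs g = rs x"
  have "rs x ;; rs (pair f g) = rs x ;; (rs f ;; rs g)" using a by simp
  also have "\<dots> = (rs x ;; rs f) ;; rs g" using a by (subst assocs) simp_all
  finally show "rs x ;; rs (pair f g) = rs x" using a by simp
qed


lemma CA: "(\<forall>A B f g. hom C A B f \<and> hom C A B g \<longrightarrow> hom C A B (c_plus C f g)) \<and>
     (\<forall>A B. hom C A B (c_zero C A B)) \<and>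
     (\<forall>A B f g h. hom C A B f \<and> hom C A B g \<and> hom C A B h \<longrightarrow>
        c_plus C (c_plus C f g) h = c_plus C f (c_plus C g h)) \<and>
     (\<forall>A B f g. hom C A B f \<and> hom C A B g \<longrightarrow> c_plus C f g = c_plus C g f) \<and>
     (\<forall>A B f. hom C A B f \<longrightarrow> c_plus C f (c_zero C A B) = f) \<and>
     (\<forall>A B f g. hom C A B f \<and> hom C A B g \<longrightarrow>
        c_rst C (c_plus C f g) = c_cmp C (c_rst C f) (c_rst C g)) \<and>
     (\<forall>A B. c_rst C (c_zero C A B) = c_id C A) \<and>
     (\<forall>X A B x f g. hom C X A x \<and> hom C A B f \<and> hom C A B g \<longrightarrow>
        c_cmp C x (c_plus C f g) = c_plus C (c_cmp C x f) (c_cmp C x g)) \<and>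
     (\<forall>X A B x. hom C X A x \<longrightarrow>
        c_cmp C x (c_zero C A B) = c_cmp C (c_rst C x) (c_zero C X B)) \<and>
     (\<forall>X A B f g. hom C X (c_prod C A B) f \<and> hom C X (c_prod C A B) g \<longrightarrow>
        c_cmp C (c_plus C f g) (c_pi0 C A B) =
          c_plus C (c_cmp C f (c_pi0 C A B)) (c_cmp C g (c_pi0 C A B)) \<and>
        c_cmp C (c_plus C f g) (c_pi1 C A B) =
          c_plus C (c_cmp C f (c_pi1 C A B)) (c_cmp C g (c_pi1 C A B))) \<and>
     (\<forall>X A B. c_cmp C (c_zero C X (c_prod C A B)) (c_pi0 C A B) = c_zero C X A \<and>
              c_cmp C (c_zero C X (c_prod C A B)) (c_pi1 C A B) = c_zero C X B)"
  using clar[unfolded is_cartesian_left_additive_def] by (elim conjE) (intro conjI; assumption)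

lemma plus_ty[simp]: "dm f = A \<Longrightarrow> dm g = A \<Longrightarrow> cd f = B \<Longrightarrow> cd g = B \<Longrightarrow> dm (f +++ g) = A"
  "dm f = A \<Longrightarrow> dm g = A \<Longrightarrow> cd f = B \<Longrightarrow> cd g = B \<Longrightarrow> cd (f +++ g) = B"
  using conjunct1[OF CA] unfolding hom_def by blast+
lemma zr_ty[simp]: "dm (zr A B) = A" "cd (zr A B) = B"
  using conjunct1[OF conjunct2[OF CA]] unfolding hom_def by blast+
lemma plus_assoc: "dm f = A \<Longrightarrow> dm g = A \<Longrightarrow> cd f = B \<Longrightarrow> cd g = B \<Longrightarrow> dm h = A \<Longrightarrow> cd h = B \<Longrightarrow>
   (f +++ g) +++ h = f +++ (g +++ h)"
  using conjunct1[OF conjunct2[OF conjunct2[OF CA]]] unfolding hom_def by blast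
lemma plus_comm: "dm f = A \<Longrightarrow> dm g = A \<Longrightarrow> cd f = B \<Longrightarrow> cd g = B \<Longrightarrow> f +++ g = g +++ f"
  using conjunct1[OF conjunct2[OF conjunct2[OF conjunct2[OF CA]]]] unfolding hom_def by blast
lemma plus_zr[simp]: "dm f = A \<Longrightarrow> cd f = B \<Longrightarrow> f +++ zr A B = f"
  using conjunct1[OF conjunct2[OF conjunct2[OF conjunct2[OF conjunct2[OF CA]]]]] unfolding hom_def by blast
lemma rs_plus[simp]: "dm f = A \<Longrightarrow> dm g = A \<Longrightarrow> cd f = B \<Longrightarrow> cd g = B \<Longrightarrow> rs (f +++ g) = rs f ;; rs g"
  using conjunct1[OF conjunct2[OF conjunct2[OF conjunct2[OF conjunct2[OF conjunct2[OF CA]]]]]] unfolding hom_def by blast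
lemma rs_zr[simp]: "rs (zr A B) = idm A"
  using conjunct1[OF conjunct2[OF conjunct2[OF conjunct2[OF conjunct2[OF conjunct2[OF conjunct2[OF CA]]]]]]] by blast
lemma cp_plus: "dm x = X \<Longrightarrow> cd x = A \<Longrightarrow> dm f = A \<Longrightarrow> dm g = A \<Longrightarrow> cd f = B \<Longrightarrow> cd g = B \<Longrightarrow>
   x ;; (f +++ g) = (x ;; f) +++ (x ;; g)"
  using conjunct1[OF conjunct2[OF conjunct2[OF conjunct2[OF conjunct2[OF conjunct2[OF conjunct2[OF conjunct2[OF CA]]]]]]]] unfolding hom_def by blast
lemma cp_zr: "dm x = X \<Longrightarrow> cd x = A \<Longrightarrow> x ;; zr A B = rs x ;; zr X B"
  using conjunct1[OF conjunct2[OF conjunct2[OF conjunct2[OF conjunct2[OF conjunct2[OF conjunct2[OF conjunct2[OF conjunct2[OF CA]]]]]]]]] unfolding hom_def by blast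
lemma plus_p: "dm f = X \<Longrightarrow> dm g = X \<Longrightarrow> cd f = pr A B \<Longrightarrow> cd g = pr A B \<Longrightarrow>
   (f +++ g) ;; p0 A B = (f ;; p0 A B) +++ (g ;; p0 A B) \<and> (f +++ g) ;; p1 A B = (f ;; p1 A B) +++ (g ;; p1 A B)"
  using conjunct1[OF conjunct2[OF conjunct2[OF conjunct2[OF conjunct2[OF conjunct2[OF conjunct2[OF conjunct2[OF conjunct2[OF conjunct2[OF CA]]]]]]]]]] unfolding hom_def by blast
lemma zr_p[simp]: "zr X (pr A B) ;; p0 A B = zr X A" "zr X (pr A B) ;; p1 A B = zr X B"
  using conjunct2[OF conjunct2[OF conjunct2[OF conjunct2[OF conjunct2[OF conjunct2[OF conjunct2[OF conjunct2[OF conjunct2[OF conjunct2[OF CA]]]]]]]]]] by blast+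

lemma zr_plus[simp]: "dm f = A \<Longrightarrow> cd f = B \<Longrightarrow> zr A B +++ f = f"
  using plus_comm[of "zr A B" A f B] by simp


abbreviation fp where "fp \<equiv> fprod C"
abbreviation io0 where "io0 \<equiv> iota0 C"
abbreviation io1 where "io1 \<equiv> iota1 C"

lemma fp_def': "fp f g = pair (p0 (dm f) (dm g) ;; f) (p1 (dm f) (dm g) ;; g)"
  by (simp add: fprod_def)
lemma fp_ty[simp]: "dm (fp f g) = pr (dm f) (dm g)" "cd (fp f g) = pr (cd f) (cd g)"
  by (simp_all add: fp_def')

lemma absorb2: "sub x a \<Longrightarrow> sub x b \<Longrightarrow> dm a = dm x \<Longrightarrow> dm b = dm x \<Longrightarrow> rs a ;; (rs b ;; x) = x"
  by (simp add: sub_absorb)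

lemma pair_fp: "dm f = X \<Longrightarrow> dm g = X \<Longrightarrow> cd f = A \<Longrightarrow> cd g = B \<Longrightarrow> dm h = A \<Longrightarrow> dm k = B \<Longrightarrow>
  pair f g ;; fp h k = pair (f ;; h) (g ;; k)"
proof -
  assume a: "dm f = X" "dm g = X" "cd f = A" "cd g = B" "dm h = A" "dm k = B"
  have "pair f g ;; fp h k = pair (rs g ;; (f ;; h)) (rs f ;; (g ;; k))"
    using a by (simp add: fp_def' cp_pair[of _ "pr A B"])
  also have "\<dots> = rs f ;; (rs g ;; pair (f ;; h) (g ;; k))"
    using a by (simp add: pair_rs_l[of _ X] pair_rs_r[of _ X])
  also have "\<dots> = pair (f ;; h) (g ;; k)"
  proof (rule absorb2)
    show "sub (pair (f ;; h) (g ;; k)) g"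
      by (rule sub_trans[OF sub_pair1 sub_cp]) (use a in simp_all)
    show "sub (pair (f ;; h) (g ;; k)) f"
      by (rule sub_trans[OF sub_pair0 sub_cp]) (use a in simp_all)
  qed (use a in simp_all)
  finally show ?thesis .
qed

lemma pair_fp_c: "dm f = X \<Longrightarrow> dm g = X \<Longrightarrow> cd f = A \<Longrightarrow> cd g = B \<Longrightarrow> dm h = A \<Longrightarrow> dm k = B \<Longrightarrow>
  dm y = pr (cd h) (cd k) \<Longrightarrow> pair f g ;; (fp h k ;; y) = pair (f ;; h) (g ;; k) ;; y"
  by (subst assocs) (simp_all add: pair_fp)

lemma fp_p0: "fp h k ;; p0 (cd h) (cd k) = rs (p1 (dm h) (dm k) ;; k) ;; (p0 (dm h) (dm k) ;; h)"
  by (simp add: fp_def')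
lemma fp_p1: "fp h k ;; p1 (cd h) (cd k) = rs (p0 (dm h) (dm k) ;; h) ;; (p1 (dm h) (dm k) ;; k)"
  by (simp add: fp_def')
lemma fp_p0_tot: "rs k = idm (dm k) \<Longrightarrow> cd h = A \<Longrightarrow> cd k = B \<Longrightarrow> fp h k ;; p0 A B = p0 (dm h) (dm k) ;; h"
  using fp_p0[of h k] by (simp add: rs_total)
lemma fp_p1_tot: "rs h = idm (dm h) \<Longrightarrow> cd h = A \<Longrightarrow> cd k = B \<Longrightarrow> fp h k ;; p1 A B = p1 (dm h) (dm k) ;; k"
  using fp_p1[of h k] by (simp add: rs_total)

lemma fp_id[simp]: "fp (idm A) (idm B) = idm (pr A B)"
  by (simp add: fp_def')

lemma fp_cp: "cd f = dm h \<Longrightarrow> cd g = dm k \<Longrightarrow> fp f g ;; fp h k = fp (f ;; h) (g ;; k)"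
  by (simp add: fp_def'[of f g] fp_def'[of "f;;h"] pair_fp)

lemma fp_rs_id: "dm u = A \<Longrightarrow> fp (rs u) (idm B) = rs (p0 A B ;; u)"
proof -
  assume a: "dm u = A"
  have "fp (rs u) (idm B) = pair (p0 A B ;; rs u) (p1 A B)" using a by (simp add: fp_def')
  also have "p0 A B ;; rs u = rs (p0 A B ;; u) ;; p0 A B" using a by (simp add: rs_R4)
  also have "pair (rs (p0 A B ;; u) ;; p0 A B) (p1 A B) = rs (p0 A B ;; u)"
    using a by (simp add: pair_rs_l[of _ "pr A B"])
  finally show ?thesis .
qed

lemma io0_def': "io0 A B = pair (idm A) (zr A B)" by (simp add: iota0_def)
lemma io1_def': "io1 A B = pair (zr B A) (idm B)" by (simp add: iota1_def)
lemma io_ty[simp]: "dm (io0 A B) = A" "cd (io0 A B) = pr A B" "dm (io1 A B) = B" "cd (io1 A B) = pr A B"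
  by (simp_all add: io0_def' io1_def')
lemma io_total[simp]: "rs (io0 A B) = idm A" "rs (io1 A B) = idm B"
  by (simp_all add: io0_def' io1_def')
lemma io0_p[simp]: "io0 A B ;; p0 A B = idm A" "io0 A B ;; p1 A B = zr A B"
  by (simp_all add: io0_def')
lemma io1_p[simp]: "io1 A B ;; p0 A B = zr B A" "io1 A B ;; p1 A B = idm B"
  by (simp_all add: io1_def')
lemma io0_p_c[simp]: "dm h = A \<Longrightarrow> io0 A B ;; (p0 A B ;; h) = h"
  "dm h = B \<Longrightarrow> io0 A B ;; (p1 A B ;; h) = zr A B ;; h"
  by (subst assocs; simp)+
lemma io1_p_c[simp]: "dm h = B \<Longrightarrow> io1 A B ;; (p1 A B ;; h) = h"
  "dm h = A \<Longrightarrow> io1 A B ;; (p0 A B ;; h) = zr B A ;; h"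
  by (subst assocs; simp)+

lemma cp_io0: "dm x = X \<Longrightarrow> cd x = A \<Longrightarrow> x ;; io0 A B = pair x (zr X B)"
proof -
  assume a: "dm x = X" "cd x = A"
  have "x ;; io0 A B = pair x (rs x ;; zr X B)" using a by (simp add: io0_def' cp_pair cp_zr[of x X A B])
  also have "\<dots> = pair x (zr X B)" using a pair_rs_r[of x X x "zr X B"] sub_absorb[OF sub_pair0, of x "zr X B"] by simp
  finally show ?thesis .
qed

end

context RD begin

lemma RDX: "(\<forall>A B f. hom C A B f \<longrightarrow> hom C (c_prod C A B) A (c_R C f)) \<and>
     (\<forall>X A B a f. hom C X A a \<and> hom C A B f \<longrightarrow>
        c_cmp C (c_pair C a (c_zero C X B)) (c_R C f) =
          c_cmp C (c_rst C (c_cmp C a f)) (c_zero C X A)) \<and>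
     (\<forall>A B. c_R C (c_pi0 C A B) =
              c_cmp C (c_pi1 C (c_prod C A B) A) (iota0 C A B) \<and>
            c_R C (c_pi1 C A B) =
              c_cmp C (c_pi1 C (c_prod C A B) B) (iota1 C A B)) \<and>
     (\<forall>X A B f g. hom C X A f \<and> hom C X B g \<longrightarrow>
        c_R C (c_pair C f g) =
          c_plus C (c_cmp C (fprod C (c_id C X) (c_pi0 C A B)) (c_R C f))
                   (c_cmp C (fprod C (c_id C X) (c_pi1 C A B)) (c_R C g))) \<and>
     (\<forall>A B D f g. hom C A B f \<and> hom C B D g \<longrightarrow>
        c_R C (c_cmp C f g) =
          c_cmp C (c_pair C (c_pi0 C A D)
                     (c_cmp C (c_pair C (c_cmp C (c_pi0 C A D) f) (c_pi1 C A D)) (c_R C g)))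
                  (c_R C f)) \<and>
     (\<forall>A B f. hom C A B f \<longrightarrow>
        c_cmp C (c_pair C (fprod C (c_id C A) (c_pi0 C B B))
                          (fprod C (c_zero C A A) (c_pi1 C B B)))
          (c_cmp C (c_cmp C (fprod C (iota0 C (c_prod C A B) A) (c_id C (c_prod C A B)))
                             (c_R C (c_R C (c_R C f))))
                   (c_pi1 C (c_prod C A B) A))
        = c_cmp C (fprod C (c_id C A) (c_pi1 C B B)) (c_R C f)) \<and>
     (\<forall>A B f. hom C A B f \<longrightarrow> c_rst C (c_R C f) = fprod C (c_rst C f) (c_id C B)) \<and>
     (\<forall>A B f. hom C A B f \<longrightarrow>
        c_R C (c_rst C f) = c_cmp C (fprod C (c_rst C f) (c_id C A)) (c_pi1 C A A))"
  using rdrc[unfolded is_rdrc_def] by (elim conjE) (intro conjI; assumption)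

lemma R_ty[simp]: "dm (RR f) = pr (dm f) (cd f)" "cd (RR f) = dm f"
  using conjunct1[OF RDX] unfolding hom_def by blast+
lemma RD2z: "dm a = X \<Longrightarrow> cd a = A \<Longrightarrow> dm f = A \<Longrightarrow> cd f = B \<Longrightarrow>
   pair a (zr X B) ;; RR f = rs (a ;; f) ;; zr X A"
  using conjunct1[OF conjunct2[OF RDX]] unfolding hom_def by blast
lemma RD3[simp]: "RR (p0 A B) = p1 (pr A B) A ;; io0 A B" "RR (p1 A B) = p1 (pr A B) B ;; io1 A B"
  using conjunct1[OF conjunct2[OF conjunct2[OF RDX]]] by blast+
lemma RD4: "dm f = X \<Longrightarrow> dm g = X \<Longrightarrow> cd f = A \<Longrightarrow> cd g = B \<Longrightarrow>
   RR (pair f g) = (fp (idm X) (p0 A B) ;; RR f) +++ (fp (idm X) (p1 A B) ;; RR g)"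
  using conjunct1[OF conjunct2[OF conjunct2[OF conjunct2[OF RDX]]]] unfolding hom_def by blast
lemma RD5: "dm f = A \<Longrightarrow> cd f = B \<Longrightarrow> dm g = B \<Longrightarrow> cd g = D \<Longrightarrow>
   RR (f ;; g) = pair (p0 A D) (pair (p0 A D ;; f) (p1 A D) ;; RR g) ;; RR f"
  using conjunct1[OF conjunct2[OF conjunct2[OF conjunct2[OF conjunct2[OF RDX]]]]] unfolding hom_def by blast
lemma RD6: "dm f = A \<Longrightarrow> cd f = B \<Longrightarrow>
   pair (fp (idm A) (p0 B B)) (fp (zr A A) (p1 B B)) ;;
     ((fp (io0 (pr A B) A) (idm (pr A B)) ;; RR (RR (RR f))) ;; p1 (pr A B) A)
   = fp (idm A) (p1 B B) ;; RR f"
  using conjunct1[OF conjunct2[OF conjunct2[OF conjunct2[OF conjunct2[OF conjunct2[OF RDX]]]]]] unfolding hom_def by blast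
lemma RD8: "dm f = A \<Longrightarrow> cd f = B \<Longrightarrow> rs (RR f) = fp (rs f) (idm B)"
  using conjunct1[OF conjunct2[OF conjunct2[OF conjunct2[OF conjunct2[OF conjunct2[OF conjunct2[OF RDX]]]]]]] unfolding hom_def by blast
lemma RD9: "dm f = A \<Longrightarrow> RR (rs f) = fp (rs f) (idm A) ;; p1 A A"
  using conjunct2[OF conjunct2[OF conjunct2[OF conjunct2[OF conjunct2[OF conjunct2[OF conjunct2[OF RDX]]]]]]] unfolding hom_def by blast


lemma rs_RR: "dm f = A \<Longrightarrow> cd f = B \<Longrightarrow> rs (RR f) = rs (p0 A B ;; f)"
  by (simp add: RD8 fp_rs_id)

lemma R_id[simp]: "RR (idm A) = p1 A A"
  using RD9[of "idm A" A] by simp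

lemma R_rs_cp: "dm u = A \<Longrightarrow> dm g = A \<Longrightarrow> cd g = B \<Longrightarrow> RR (rs u ;; g) = rs (p0 A B ;; u) ;; RR g"
proof -
  assume a: "dm u = A" "dm g = A" "cd g = B"
  let ?e = "p0 A B ;; u"
  have "RR (rs u ;; g) = pair (p0 A B) (pair (p0 A B ;; rs u) (p1 A B) ;; RR g) ;; RR (rs u)"
    using a by (intro RD5) simp_all
  also have "pair (p0 A B ;; rs u) (p1 A B) = fp (rs u) (idm B)" using a by (simp add: fp_def')
  also have "\<dots> = rs ?e" using a by (simp add: fp_rs_id)
  also have "RR (rs u) = fp (rs u) (idm A) ;; p1 A A" using a by (simp add: RD9)
  also have "pair (p0 A B) (rs ?e ;; RR g) ;; (fp (rs u) (idm A) ;; p1 A A)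
      = pair (p0 A B ;; rs u) (rs ?e ;; RR g) ;; p1 A A"
    using a by (subst pair_fp_c) simp_all
  also have "\<dots> = rs (p0 A B ;; rs u) ;; (rs ?e ;; RR g)"
    using a by (subst pair_p1) simp_all
  also have "\<dots> = rs ?e ;; RR g" using a by (simp add: rs_cp_rs)
  finally show ?thesis .
qed

lemma zr_plus_absorb: "dm e = X \<Longrightarrow> dm v = X \<Longrightarrow> cd v = B \<Longrightarrow> sub v e \<Longrightarrow> (rs e ;; zr X B) +++ v = v"
proof -
  assume a: "dm e = X" "dm v = X" "cd v = B" "sub v e"
  have v: "rs e ;; v = v" using a by (simp add: sub_absorb)
  have "(rs e ;; zr X B) +++ v = (rs e ;; zr X B) +++ (rs e ;; v)" using v by simp
  also have "\<dots> = rs e ;; (zr X B +++ v)" using a by (subst cp_plus[of _ X X]) simp_all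
  also have "\<dots> = v" using a v by simp
  finally show ?thesis .
qed

lemma total_cp: "rs f = idm (dm f) \<Longrightarrow> rs g = idm (dm g) \<Longrightarrow> cd f = dm g \<Longrightarrow> rs (f ;; g) = idm (dm f)"
  by (simp add: rs_total)


lemma rs_cp_tot[simp]: "cd f = pr A B \<Longrightarrow> rs (f ;; p0 A B) = rs f"
  "cd f = pr A B \<Longrightarrow> rs (f ;; p1 A B) = rs f"
  "cd f = A \<Longrightarrow> rs (f ;; io0 A B) = rs f"
  "cd f = B \<Longrightarrow> rs (f ;; io1 A B) = rs f"
  by (simp_all add: rs_total)

lemma Q_def': "fp (io0 A A) (idm A) = pair (p0 A A ;; io0 A A) (p1 A A)"
  by (simp add: fp_def')

lemma R_io0_total: "rs (RR (io0 A B)) = idm (pr A (pr A B))"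
  by (simp add: RD8)

lemma RQ: "dm a = X \<Longrightarrow> cd a = pr A A \<Longrightarrow> dm n = X \<Longrightarrow> cd n = pr (pr A A) A \<Longrightarrow>
  pair a n ;; (RR (fp (io0 A A) (idm A)) ;; p1 A A) = rs a ;; (n ;; p1 (pr A A) A)"
proof -
  assume a: "dm a = X" "cd a = pr A A" "dm n = X" "cd n = pr (pr A A) A"
  let ?Pa = "p0 A A" and ?Pb = "p1 A A" and ?i = "io0 A A"
  let ?Qa = "p0 (pr A A) A" and ?Qb = "p1 (pr A A) A"
  let ?Ta = "p0 (pr A A) (pr A A)" and ?Tb = "p1 (pr A A) (pr A A)"
  let ?S = "fp (idm (pr A A)) ?Qa ;; RR (?Pa ;; ?i)"
  let ?T = "fp (idm (pr A A)) ?Qb ;; RR ?Pb"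
  let ?Y = "pair (?Ta ;; ?Pa) ?Tb ;; RR ?i"
  have RQ: "RR (fp ?i (idm A)) = ?S +++ ?T"
    unfolding Q_def' by (rule RD4) simp_all
  have Yt: "rs ?Y = idm (pr (pr A A) (pr A A))"
    by (subst rs_total) (simp_all add: R_io0_total)
  have RP: "RR (?Pa ;; ?i) = pair ?Ta ?Y ;; RR ?Pa"
    by (rule RD5) simp_all
  have S1: "RR (?Pa ;; ?i) ;; ?Pb = zr (pr (pr A A) (pr A A)) A"
  proof -
    have "RR (?Pa ;; ?i) ;; ?Pb = pair ?Ta ?Y ;; (?Qb ;; (?i ;; ?Pb))"
      unfolding RP by simp
    also have "\<dots> = ?Y ;; zr A A" by simp
    also have "\<dots> = zr (pr (pr A A) (pr A A)) A" using Yt cp_zr[of ?Y "pr (pr A A) (pr A A)" A A] by simp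
    finally show ?thesis .
  qed
  have "pair a n ;; (RR (fp ?i (idm A)) ;; ?Pb) = (pair a n ;; (?S +++ ?T)) ;; ?Pb"
    unfolding RQ using a by (subst assoc) simp_all
  also have "pair a n ;; (?S +++ ?T) = (pair a n ;; ?S) +++ (pair a n ;; ?T)"
    using a by (subst cp_plus[of _ X "pr (pr A A) (pr (pr A A) A)" _ _ "pr A A"]) simp_all
  also have "((pair a n ;; ?S) +++ (pair a n ;; ?T)) ;; ?Pb = ((pair a n ;; ?S) ;; ?Pb) +++ ((pair a n ;; ?T) ;; ?Pb)"
    using a by (intro conjunct2[OF plus_p]) simp_all
  also have "(pair a n ;; ?S) ;; ?Pb = pair a (n ;; ?Qa) ;; (RR (?Pa ;; ?i) ;; ?Pb)"
    using a by (simp add: pair_fp_c)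
  also have "\<dots> = rs (pair a (n ;; ?Qa)) ;; zr X A"
    using a cp_zr[of "pair a (n ;; ?Qa)" X "pr (pr A A) (pr A A)" A] by (simp add: S1)
  also have "(pair a n ;; ?T) ;; ?Pb = rs a ;; (n ;; ?Qb)"
    using a by (simp add: pair_fp_c)
  also have "(rs (pair a (n ;; ?Qa)) ;; zr X A) +++ (rs a ;; (n ;; ?Qb)) = rs a ;; (n ;; ?Qb)"
  proof (rule zr_plus_absorb)
    show "sub (rs a ;; (n ;; ?Qb)) (pair a (n ;; ?Qa))"
      using a by (subst sub_rs_eq[of _ "pair a (n ;; ?Qa)"]) (simp_all add: rs_R3 rs_total)
  qed (use a in simp_all)
  finally show ?thesis .
qed


lemma La: "fp (idm A) (zr A A) = p0 A A ;; io0 A A"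
proof -
  have "fp (idm A) (zr A A) = pair (p0 A A) (p1 A A ;; zr A A)" by (simp add: fp_def')
  also have "p1 A A ;; zr A A = zr (pr A A) A" using cp_zr[of "p1 A A" "pr A A" A A] by simp
  also have "pair (p0 A A) (zr (pr A A) A) = p0 A A ;; io0 A A" by (simp add: cp_io0)
  finally show ?thesis .
qed
lemma Lb: "fp (zr A A) (idm A) = p1 A A ;; io1 A A"
proof -
  have "fp (zr A A) (idm A) = pair (p0 A A ;; zr A A) (p1 A A)" by (simp add: fp_def')
  also have "p0 A A ;; zr A A = zr (pr A A) A" using cp_zr[of "p0 A A" "pr A A" A A] by simp
  also have "pair (zr (pr A A) A) (p1 A A) = p1 A A ;; io1 A A"
    using cp_zr[of "p1 A A" "pr A A" A A] by (simp add: io1_def' cp_pair)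
  finally show ?thesis .
qed
lemma Lc: "io0 A A ;; fp (io0 A A) (idm A) = io0 A A ;; io0 (pr A A) A"
proof -
  have "io0 A A ;; fp (io0 A A) (idm A) = pair (io0 A A) (zr A A)"
    by (simp add: fp_def' cp_pair)
  also have "\<dots> = io0 A A ;; io0 (pr A A) A" by (simp add: cp_io0)
  finally show ?thesis .
qed

lemma RD6': "dm f = A \<Longrightarrow> cd f = A \<Longrightarrow>
  pair (p0 A A ;; (io0 A A ;; fp (io0 A A) (idm A))) (p1 A A ;; io1 A A) ;; (RR (RR (RR f)) ;; p1 (pr A A) A) = RR f"
proof -
  assume a: "dm f = A" "cd f = A"
  let ?L = "pair (fp (idm A) (p0 A A)) (fp (zr A A) (p1 A A))"
  let ?Z = "RR (RR (RR f)) ;; p1 (pr A A) A"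
  have r6: "?L ;; (fp (io0 (pr A A) A) (idm (pr A A)) ;; ?Z) = fp (idm A) (p1 A A) ;; RR f"
    using RD6[OF a] a by simp
  have "fp (idm A) (io1 A A) ;; (?L ;; (fp (io0 (pr A A) A) (idm (pr A A)) ;; ?Z))
     = fp (idm A) (io1 A A) ;; (fp (idm A) (p1 A A) ;; RR f)" by (simp only: r6)
  also have "\<dots> = RR f" using a by (subst assocs) (simp_all add: fp_cp)
  finally have e1: "fp (idm A) (io1 A A) ;; (?L ;; (fp (io0 (pr A A) A) (idm (pr A A)) ;; ?Z)) = RR f" .
  have e2: "fp (idm A) (io1 A A) ;; ?L = pair (fp (idm A) (zr A A)) (fp (zr A A) (idm A))"
    by (simp add: cp_pair fp_cp)
  have "fp (idm A) (io1 A A) ;; (?L ;; (fp (io0 (pr A A) A) (idm (pr A A)) ;; ?Z))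
    = pair (fp (idm A) (zr A A)) (fp (zr A A) (idm A)) ;; (fp (io0 (pr A A) A) (idm (pr A A)) ;; ?Z)"
    using a by (subst assocs) (simp_all add: e2)
  also have "\<dots> = pair (fp (idm A) (zr A A) ;; io0 (pr A A) A) (fp (zr A A) (idm A)) ;; ?Z"
    using a by (subst pair_fp_c) simp_all
  also have "fp (idm A) (zr A A) ;; io0 (pr A A) A = p0 A A ;; (io0 A A ;; fp (io0 A A) (idm A))"
    by (simp add: La Lc)
  finally show ?thesis using e1 by (simp add: Lb)
qed

end

context RD begin

lemma fwdD_eq: "dm f = A \<Longrightarrow> cd f = A \<Longrightarrow> fwdD C A A f = fp (io0 A A) (idm A) ;; (RR (RR f) ;; p1 A A)"
  unfolding fwdD_def by simp

lemma fp_p0_tot_c: "rs k = idm (dm k) \<Longrightarrow> cd h = A \<Longrightarrow> cd k = B \<Longrightarrow> dm y = A \<Longrightarrow>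
   fp h k ;; (p0 A B ;; y) = p0 (dm h) (dm k) ;; (h ;; y)"
  by (subst assocs) (simp_all add: fp_p0_tot)
lemma fp_p1_tot_c: "rs h = idm (dm h) \<Longrightarrow> cd h = A \<Longrightarrow> cd k = B \<Longrightarrow> dm y = B \<Longrightarrow>
   fp h k ;; (p1 A B ;; y) = p1 (dm h) (dm k) ;; (k ;; y)"
  by (subst assocs) (simp_all add: fp_p1_tot)

lemma iQ: "io0 A A ;; fp (io0 A A) (idm A) = pair (io0 A A) (zr A A)"
  by (simp add: Lc cp_io0)

lemma iQRR: "dm f = A \<Longrightarrow> cd f = A \<Longrightarrow> io0 A A ;; (fp (io0 A A) (idm A) ;; RR (RR f)) = rs f ;; zr A (pr A A)"
proof -
  assume a: "dm f = A" "cd f = A"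
  have "io0 A A ;; (fp (io0 A A) (idm A) ;; RR (RR f)) = pair (io0 A A) (zr A A) ;; RR (RR f)"
    using a by (subst assocs) (simp_all add: iQ)
  also have "\<dots> = rs (io0 A A ;; RR f) ;; zr A (pr A A)"
    using a by (subst RD2z) simp_all
  also have "io0 A A ;; RR f = rs f ;; zr A A"
    using a by (simp add: io0_def' RD2z)
  finally show ?thesis using a by (simp add: rs_R3)
qed

lemma Dag: "dm f = A \<Longrightarrow> cd f = A \<Longrightarrow>
  fp (io0 A A) (idm A) ;; (RR (fwdD C A A f) ;; p1 A A) = RR f"
proof -
  assume a: "dm f = A" "cd f = A"
  let ?Q = "fp (io0 A A) (idm A)"
  let ?M = "?Q ;; RR (RR f)"
  let ?e = "p0 (pr A A) A ;; ?M"
  let ?i = "io0 A A" and ?j = "io1 A A"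
  let ?X = "pair (p0 (pr A A) (pr A A) ;; ?Q) (p1 (pr A A) (pr A A)) ;; RR (RR (RR f))"
  let ?N = "pair (p0 A A ;; (?i ;; ?Q)) (p1 A A ;; ?j) ;; RR (RR (RR f))"
  have D: "fwdD C A A f = ?M ;; p1 A A" using a by (simp add: fwdD_eq[OF a])
  have s1: "RR (fwdD C A A f) = rs ?e ;; (fp (idm (pr A A)) ?j ;; RR ?M)"
  proof -
    have "RR (?M ;; p1 A A) = pair (p0 (pr A A) A) (pair (p0 (pr A A) A ;; ?M) (p1 (pr A A) A) ;; RR (p1 A A)) ;; RR ?M"
      by (rule RD5) (simp_all add: a)
    also have "pair (p0 (pr A A) A ;; ?M) (p1 (pr A A) A) ;; RR (p1 A A) = rs ?e ;; (p1 (pr A A) A ;; ?j)"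
      using a by (simp del: assoc)
    also have "pair (p0 (pr A A) A) (rs ?e ;; (p1 (pr A A) A ;; ?j)) = rs ?e ;; pair (p0 (pr A A) A) (p1 (pr A A) A ;; ?j)"
      using a by (subst pair_rs_r[of _ "pr (pr A A) A"]) simp_all
    also have "pair (p0 (pr A A) A) (p1 (pr A A) A ;; ?j) = fp (idm (pr A A)) ?j"
      by (simp add: fp_def')
    finally show ?thesis using a by (simp add: D)
  qed
  have s2: "RR ?M = pair (p0 (pr A A) (pr A A)) ?X ;; RR ?Q"
    by (rule RD5) (simp_all add: a)
  have "?Q ;; (RR (fwdD C A A f) ;; p1 A A) = ?Q ;; (rs ?e ;; (fp (idm (pr A A)) ?j ;; (pair (p0 (pr A A) (pr A A)) ?X ;; (RR ?Q ;; p1 A A))))"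
    using a by (simp add: s1 s2)
  also have "\<dots> = rs (?Q ;; ?e) ;; (?Q ;; (fp (idm (pr A A)) ?j ;; (pair (p0 (pr A A) (pr A A)) ?X ;; (RR ?Q ;; p1 A A))))"
    using a by (subst rs_R4_c) simp_all
  also have "?Q ;; (fp (idm (pr A A)) ?j ;; (pair (p0 (pr A A) (pr A A)) ?X ;; (RR ?Q ;; p1 A A)))
     = fp ?i ?j ;; (pair (p0 (pr A A) (pr A A)) ?X ;; (RR ?Q ;; p1 A A))"
    using a by (subst assocs) (simp_all add: fp_cp)
  also have "\<dots> = pair (fp ?i ?j ;; p0 (pr A A) (pr A A)) (fp ?i ?j ;; ?X) ;; (RR ?Q ;; p1 A A)"
    using a by (subst assocs) (simp_all add: cp_pair[of _ "pr (pr A A) (pr A A)"])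
  also have "fp ?i ?j ;; p0 (pr A A) (pr A A) = p0 A A ;; ?i"
    by (subst fp_p0_tot) simp_all
  also have "fp ?i ?j ;; ?X = ?N"
  proof -
    have "fp ?i ?j ;; ?X = (fp ?i ?j ;; pair (p0 (pr A A) (pr A A) ;; ?Q) (p1 (pr A A) (pr A A))) ;; RR (RR (RR f))"
      using a by (subst assocs) simp_all
    also have "fp ?i ?j ;; pair (p0 (pr A A) (pr A A) ;; ?Q) (p1 (pr A A) (pr A A))
       = pair (p0 A A ;; (?i ;; ?Q)) (p1 A A ;; ?j)"
      by (simp add: cp_pair[of _ "pr (pr A A) (pr A A)"] fp_p0_tot_c fp_p1_tot)
    finally show ?thesis .
  qed
  also have "pair (p0 A A ;; ?i) ?N ;; (RR ?Q ;; p1 A A) = ?N ;; p1 (pr A A) A"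
    using a by (subst RQ) simp_all
  also have "?N ;; p1 (pr A A) A = RR f"
    using a by (subst assoc) (simp_all add: RD6')
  also have "rs (?Q ;; ?e) = rs (RR f)"
  proof -
    have "?Q ;; ?e = p0 A A ;; (rs f ;; zr A (pr A A))"
      using a by (simp add: fp_p0_tot_c iQRR)
    moreover have "rs ((p0 A A ;; rs f) ;; zr A (pr A A)) = rs (p0 A A ;; rs f)"
      using a by (intro rs_total) simp_all
    ultimately have "rs (?Q ;; ?e) = rs (p0 A A ;; rs f)" using a by simp
    thus ?thesis using a by (simp add: rs_cp_rs rs_RR)
  qed
  finally show ?thesis by simp
qed


lemma D_ty[simp]: "dm f = A \<Longrightarrow> cd f = A \<Longrightarrow> dm (fwdD C A A f) = pr A A"
  "dm f = A \<Longrightarrow> cd f = A \<Longrightarrow> cd (fwdD C A A f) = A"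
  by (simp_all add: fwdD_eq)

lemma tanT_eq: "tanT C A f = pair (p0 A A ;; f) (fwdD C A A f)"
  by (simp add: tanT_def)

lemma iD: "dm f = A \<Longrightarrow> cd f = A \<Longrightarrow> io0 A A ;; fwdD C A A f = rs f ;; zr A A"
proof -
  assume a: "dm f = A" "cd f = A"
  have "io0 A A ;; fwdD C A A f = (io0 A A ;; (fp (io0 A A) (idm A) ;; RR (RR f))) ;; p1 A A"
    using a by (simp add: fwdD_eq)
  also have "\<dots> = rs f ;; zr A A" using a by (simp add: iQRR)
  finally show ?thesis .
qed

lemma K1: "dm f = A \<Longrightarrow> cd f = A \<Longrightarrow> dm b = A \<Longrightarrow>
  io0 A A ;; (rs (p0 A A ;; b) ;; tanT C A f) = rs b ;; (f ;; io0 A A)"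
proof -
  assume a: "dm f = A" "cd f = A" "dm b = A"
  have "io0 A A ;; (rs (p0 A A ;; b) ;; tanT C A f) = rs (io0 A A ;; (p0 A A ;; b)) ;; (io0 A A ;; tanT C A f)"
    using a by (subst rs_R4_c) (simp_all add: tanT_eq)
  also have "io0 A A ;; tanT C A f = pair f (rs f ;; zr A A)"
    using a by (simp add: tanT_eq cp_pair iD)
  also have "\<dots> = f ;; io0 A A"
    using a pair_rs_r[of f A f "zr A A"] sub_absorb[OF sub_pair0, of f "zr A A"] by (simp add: cp_io0)
  finally show ?thesis using a by simp
qed

lemma rsR: "dm b = X \<Longrightarrow> dm w = X \<Longrightarrow> cd b = A \<Longrightarrow> cd w = B \<Longrightarrow> dm f = A \<Longrightarrow> cd f = B \<Longrightarrow>
  rs (pair b w ;; RR f) = rs (b ;; f) ;; rs w"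
proof -
  assume a: "dm b = X" "dm w = X" "cd b = A" "cd w = B" "dm f = A" "cd f = B"
  have "rs (pair b w ;; RR f) = rs (pair b w ;; rs (RR f))" using a by (simp add: rs_cp_rs)
  also have "\<dots> = rs (pair (b ;; rs f) w)" using a by (simp add: RD8 pair_fp)
  also have "\<dots> = rs (b ;; f) ;; rs w" using a by (simp add: rs_cp_rs)
  finally show ?thesis .
qed


lemma zr_plus_absorb2: "dm e1 = X \<Longrightarrow> dm e2 = X \<Longrightarrow> dm v = X \<Longrightarrow> cd v = B \<Longrightarrow> sub v e1 \<Longrightarrow> sub v e2 \<Longrightarrow>
   (rs e1 ;; (rs e2 ;; zr X B)) +++ v = v"
proof -
  assume a: "dm e1 = X" "dm e2 = X" "dm v = X" "cd v = B" "sub v e1" "sub v e2"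
  have "rs e1 ;; (rs e2 ;; zr X B) = rs (rs e1 ;; e2) ;; zr X B"
    using a by (subst assocs) (simp_all add: rs_R3)
  moreover have "(rs (rs e1 ;; e2) ;; zr X B) +++ v = v"
    using a by (intro zr_plus_absorb sub_meet) simp_all
  ultimately show ?thesis by simp
qed

lemma K2: "dm a = X \<Longrightarrow> cd a = A \<Longrightarrow> dm z = X \<Longrightarrow> cd z = pr A A \<Longrightarrow> dm f = A \<Longrightarrow> cd f = A \<Longrightarrow> dm b = A \<Longrightarrow>
  pair (a ;; io0 A A) z ;; (RR (rs (p0 A A ;; b) ;; tanT C A f) ;; p1 A A) = rs (a ;; b) ;; (pair a (z ;; p1 A A) ;; RR f)"
proof -
  assume a: "dm a = X" "cd a = A" "dm z = X" "cd z = pr A A" "dm f = A" "cd f = A" "dm b = A"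
  let ?T = "tanT C A f" and ?D = "fwdD C A A f" and ?i = "io0 A A"
  let ?e = "p0 (pr A A) (pr A A) ;; (p0 A A ;; b)"
  let ?S = "fp (idm (pr A A)) (p0 A A) ;; RR (p0 A A ;; f)"
  let ?U = "fp (idm (pr A A)) (p1 A A) ;; RR ?D"
  let ?pz = "pair (a ;; ?i) z"
  let ?pz' = "pair (a ;; ?i) (z ;; p0 A A)"
  let ?v = "pair a (z ;; p1 A A) ;; RR f"
  have Tt: "dm ?T = pr A A" "cd ?T = pr A A" using a by (simp_all add: tanT_eq)
  have h1: "RR (rs (p0 A A ;; b) ;; ?T) = rs ?e ;; (?S +++ ?U)"
  proof -
    have "RR (rs (p0 A A ;; b) ;; ?T) = rs ?e ;; RR ?T"
      using a Tt by (subst R_rs_cp) simp_all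
    also have "RR ?T = ?S +++ ?U" unfolding tanT_eq using a by (subst RD4) simp_all
    finally show ?thesis .
  qed
  have "?pz ;; (RR (rs (p0 A A ;; b) ;; ?T) ;; p1 A A) = ?pz ;; (rs ?e ;; ((?S +++ ?U) ;; p1 A A))"
    using a by (simp add: h1)
  also have "\<dots> = rs (?pz ;; ?e) ;; (?pz ;; ((?S +++ ?U) ;; p1 A A))"
    using a by (subst rs_R4_c) simp_all
  also have "rs (?pz ;; ?e) = rs z ;; rs (a ;; b)"
    using a by (simp add: rs_R3)
  also have "?pz ;; ((?S +++ ?U) ;; p1 A A) = ((?pz ;; ?S) ;; p1 A A) +++ ((?pz ;; ?U) ;; p1 A A)"
  proof -
    have "?pz ;; ((?S +++ ?U) ;; p1 A A) = (?pz ;; (?S +++ ?U)) ;; p1 A A"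
      using a by (subst assocs) simp_all
    also have "?pz ;; (?S +++ ?U) = (?pz ;; ?S) +++ (?pz ;; ?U)"
      using a by (subst cp_plus[of _ X "pr (pr A A) (pr A A)" _ _ "pr A A"]) simp_all
    also have "((?pz ;; ?S) +++ (?pz ;; ?U)) ;; p1 A A = ((?pz ;; ?S) ;; p1 A A) +++ ((?pz ;; ?U) ;; p1 A A)"
      using a by (intro conjunct2[OF plus_p]) simp_all
    finally show ?thesis .
  qed
  also have "(?pz ;; ?U) ;; p1 A A = ?v"
  proof -
    have "(?pz ;; ?U) ;; p1 A A = pair (a ;; ?i) (z ;; p1 A A) ;; (RR ?D ;; p1 A A)"
      using a by (simp add: pair_fp_c)
    also have "pair (a ;; ?i) (z ;; p1 A A) = pair a (z ;; p1 A A) ;; fp ?i (idm A)"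
      using a by (simp add: pair_fp)
    also have "(pair a (z ;; p1 A A) ;; fp ?i (idm A)) ;; (RR ?D ;; p1 A A) = pair a (z ;; p1 A A) ;; (fp ?i (idm A) ;; (RR ?D ;; p1 A A))"
      using a by (subst assoc) simp_all
    also have "fp ?i (idm A) ;; (RR ?D ;; p1 A A) = RR f" by (rule Dag[OF a(5) a(6)])
    finally show ?thesis .
  qed
  also have "(?pz ;; ?S) ;; p1 A A = rs (pair a (z ;; p0 A A) ;; RR f) ;; (rs ?pz' ;; zr X A)"
  proof -
    let ?Y = "fp (p0 A A) (idm A) ;; RR f"
    have RP: "RR (p0 A A ;; f) = pair (p0 (pr A A) A) ?Y ;; RR (p0 A A)"
      using a by (subst RD5[of _ "pr A A" A _ A]) (simp_all add: fp_def')
    have "RR (p0 A A ;; f) ;; p1 A A = ?Y ;; zr A A"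
      unfolding RP using a by simp
    also have "\<dots> = rs ?Y ;; zr (pr (pr A A) A) A"
      using a cp_zr[of ?Y "pr (pr A A) A" A A] by simp
    finally have RP1: "RR (p0 A A ;; f) ;; p1 A A = rs ?Y ;; zr (pr (pr A A) A) A" .
    have "(?pz ;; ?S) ;; p1 A A = ?pz' ;; (RR (p0 A A ;; f) ;; p1 A A)"
      using a by (simp add: pair_fp_c)
    also have "\<dots> = ?pz' ;; (rs ?Y ;; zr (pr (pr A A) A) A)" by (simp only: RP1)
    also have "\<dots> = rs (?pz' ;; ?Y) ;; (?pz' ;; zr (pr (pr A A) A) A)"
      using a by (subst rs_R4_c) simp_all
    also have "?pz' ;; zr (pr (pr A A) A) A = rs ?pz' ;; zr X A"
      using a cp_zr[of ?pz' X "pr (pr A A) A" A] by simp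
    also have "?pz' ;; ?Y = pair a (z ;; p0 A A) ;; RR f"
      using a by (subst assocs) (simp_all add: pair_fp)
    finally show ?thesis .
  qed
  also have "(rs (pair a (z ;; p0 A A) ;; RR f) ;; (rs ?pz' ;; zr X A)) +++ ?v = ?v"
  proof (rule zr_plus_absorb2)
    have r1: "rs ?v = rs (a ;; f) ;; rs z" using a by (simp add: rsR[of _ X])
    have r2: "rs (pair a (z ;; p0 A A) ;; RR f) = rs (a ;; f) ;; rs z" using a by (simp add: rsR[of _ X])
    have "rs (pair a (z ;; p0 A A) ;; RR f) = rs ?v" using r1 r2 by simp
    thus "sub ?v (pair a (z ;; p0 A A) ;; RR f)" unfolding sub_def by (simp only: rs_idem)
    have "sub ?v (pair a (z ;; p1 A A))" using a by (intro sub_cp) simp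
    moreover have "rs (pair a (z ;; p1 A A)) = rs ?pz'" using a by simp
    ultimately show "sub ?v ?pz'" unfolding sub_def by simp
  qed (use a in simp_all)
  also have "(rs z ;; rs (a ;; b)) ;; ?v = rs (a ;; b) ;; ?v"
  proof -
    have "sub ?v z"
    proof (rule sub_trans[of _ "pair a (z ;; p1 A A)"])
      show "sub ?v (pair a (z ;; p1 A A))" using a by (intro sub_cp) simp
      show "sub (pair a (z ;; p1 A A)) z"
        using a by (intro sub_trans[OF sub_pair1 sub_cp]) simp_all
    qed (use a in simp_all)
    hence "rs z ;; ?v = ?v" using a by (intro sub_absorb) simp_all
    moreover have "rs z ;; (rs (a ;; b) ;; ?v) = rs (a ;; b) ;; (rs z ;; ?v)"
      using a by (intro rs_lcomm) simp_all
    ultimately show ?thesis using a by simp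
  qed
  finally show ?thesis .
qed


lemma Step: "dm f = A \<Longrightarrow> cd f = A \<Longrightarrow> dm b = A \<Longrightarrow> dm g = A \<Longrightarrow> cd g = A \<Longrightarrow>
  dm y = pr A A \<Longrightarrow> cd y = A \<Longrightarrow>
  fp (io0 A A) (idm A) ;; (RR y ;; p1 A A) = RR g \<Longrightarrow>
  fp (io0 A A) (idm A) ;; (RR ((rs (p0 A A ;; b) ;; tanT C A f) ;; y) ;; p1 A A) = RR ((rs b ;; f) ;; g)"
proof -
  assume a: "dm f = A" "cd f = A" "dm b = A" "dm g = A" "cd g = A" "dm y = pr A A" "cd y = A"
    and IH: "fp (io0 A A) (idm A) ;; (RR y ;; p1 A A) = RR g"
  let ?k = "rs (p0 A A ;; b) ;; tanT C A f" and ?h = "rs b ;; f"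
  let ?Q = "fp (io0 A A) (idm A)" and ?i = "io0 A A"
  let ?Z = "pair (p0 (pr A A) A ;; ?k) (p1 (pr A A) A) ;; RR y"
  let ?z = "fp ?h (idm A) ;; (?Q ;; RR y)"
  let ?w = "fp ?h (idm A) ;; RR g"
  have kt: "dm ?k = pr A A" "cd ?k = pr A A" using a by (simp_all add: tanT_eq)
  have "RR (?k ;; y) = pair (p0 (pr A A) A) ?Z ;; RR ?k"
    using a kt by (intro RD5) simp_all
  hence "?Q ;; (RR (?k ;; y) ;; p1 A A) = (?Q ;; pair (p0 (pr A A) A) ?Z) ;; (RR ?k ;; p1 A A)"
    using a kt by simp
  also have "?Q ;; pair (p0 (pr A A) A) ?Z = pair (p0 A A ;; ?i) (?Q ;; ?Z)"
    using a kt by (simp add: cp_pair[of _ "pr (pr A A) A"] fp_p0_tot)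
  also have "?Q ;; ?Z = ?z"
  proof -
    have "?Q ;; ?Z = (?Q ;; pair (p0 (pr A A) A ;; ?k) (p1 (pr A A) A)) ;; RR y"
      using a kt by (subst assocs) simp_all
    also have "?Q ;; pair (p0 (pr A A) A ;; ?k) (p1 (pr A A) A) = pair (p0 A A ;; (?i ;; ?k)) (p1 A A)"
      using a kt by (simp add: cp_pair[of _ "pr (pr A A) A"] fp_p0_tot_c fp_p1_tot)
    also have "?i ;; ?k = ?h ;; ?i" using a by (simp add: K1)
    also have "pair (p0 A A ;; (?h ;; ?i)) (p1 A A) = fp ?h (idm A) ;; ?Q"
      using a by (subst fp_cp) (simp_all add: fp_def')
    finally show ?thesis using a by simp
  qed
  also have "pair (p0 A A ;; ?i) ?z ;; (RR ?k ;; p1 A A) = rs (p0 A A ;; b) ;; (pair (p0 A A) (?z ;; p1 A A) ;; RR f)"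
    using a by (intro K2) simp_all
  also have "?z ;; p1 A A = ?w"
    using a IH by simp
  also have "rs (p0 A A ;; b) ;; (pair (p0 A A) ?w ;; RR f) = RR (?h ;; g)"
  proof -
    have "RR (?h ;; g) = pair (p0 A A) (pair (p0 A A ;; ?h) (p1 A A) ;; RR g) ;; RR ?h"
      using a by (intro RD5) simp_all
    also have "pair (p0 A A ;; ?h) (p1 A A) = fp ?h (idm A)" using a by (simp add: fp_def')
    also have "RR ?h = rs (p0 A A ;; b) ;; RR f" using a by (simp add: R_rs_cp)
    also have "pair (p0 A A) ?w ;; (rs (p0 A A ;; b) ;; RR f)
        = rs (pair (p0 A A) ?w ;; (p0 A A ;; b)) ;; (pair (p0 A A) ?w ;; RR f)"
      using a by (subst rs_R4_c) simp_all
    also have "rs (pair (p0 A A) ?w ;; (p0 A A ;; b)) = rs ?w ;; rs (p0 A A ;; b)"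
      using a by (simp add: rs_R3)
    also have "(rs ?w ;; rs (p0 A A ;; b)) ;; (pair (p0 A A) ?w ;; RR f) = rs (p0 A A ;; b) ;; (pair (p0 A A) ?w ;; RR f)"
    proof -
      have "sub (pair (p0 A A) ?w ;; RR f) ?w"
        using a by (intro sub_trans[OF sub_cp sub_pair1]) simp_all
      hence "rs ?w ;; (pair (p0 A A) ?w ;; RR f) = pair (p0 A A) ?w ;; RR f"
        using a by (intro sub_absorb) simp_all
      moreover have "rs ?w ;; (rs (p0 A A ;; b) ;; (pair (p0 A A) ?w ;; RR f))
          = rs (p0 A A ;; b) ;; (rs ?w ;; (pair (p0 A A) ?w ;; RR f))"
        using a by (intro rs_lcomm) simp_all
      ultimately show ?thesis using a by simp
    qed
    finally show ?thesis ..
  qed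
  finally show ?thesis using a by simp
qed

end

context RD begin

lemma CJ1: assumes "\<forall>i\<in>I. hom C A B (fs i)" "pairwise_disjoint C I fs" shows "\<exists>j. is_join C A B I fs j"
proof -
  have "\<forall>A B I fs. (\<forall>i\<in>I. hom C A B (fs i)) \<and> pairwise_disjoint C I fs \<longrightarrow>
        (\<exists>j. is_join C A B I fs j)" using cj unfolding has_countable_disjoint_joins_def by (rule conjunct1)
  hence "(\<forall>i\<in>I. hom C A B (fs i)) \<and> pairwise_disjoint C I fs \<longrightarrow> (\<exists>j. is_join C A B I fs j)"
    by (elim allE)
  thus ?thesis using assms by simp
qed
lemma CJ2: assumes "\<forall>i\<in>I. hom C A B (fs i)" "pairwise_disjoint C I fs" "is_join C A B I fs j"
  "hom C X A h" "hom C B Y k" shows "is_join C X Y I (\<lambda>i. (h ;; fs i) ;; k) ((h ;; j) ;; k)"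
proof -
  have "\<forall>A B X Y I fs j h k. (\<forall>i\<in>I. hom C A B (fs i)) \<and> pairwise_disjoint C I fs \<and>
        is_join C A B I fs j \<and> hom C X A h \<and> hom C B Y k \<longrightarrow>
        is_join C X Y I (\<lambda>i. c_cmp C (c_cmp C h (fs i)) k) (c_cmp C (c_cmp C h j) k)"
    using cj unfolding has_countable_disjoint_joins_def by (rule conjunct2)
  hence "(\<forall>i\<in>I. hom C A B (fs i)) \<and> pairwise_disjoint C I fs \<and>
        is_join C A B I fs j \<and> hom C X A h \<and> hom C B Y k \<longrightarrow>
        is_join C X Y I (\<lambda>i. c_cmp C (c_cmp C h (fs i)) k) (c_cmp C (c_cmp C h j) k)"
    by (elim allE)
  thus ?thesis using assms by simp
qed

lemma rle_iff: "rle C f g \<longleftrightarrow> dm f = dm g \<and> cd f = cd g \<and> rs f ;; g = f"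
  unfolding rle_def parallel_def by simp

lemma rle_antisym: "rle C f g \<Longrightarrow> rle C g f \<Longrightarrow> f = g"
proof -
  assume a: "rle C f g" "rle C g f"
  hence t: "dm f = dm g" "cd f = cd g" and e1: "rs f ;; g = f" and e2: "rs g ;; f = g"
    by (simp_all add: rle_iff)
  have "rs f = rs f ;; rs g" using e1 t rs_R3[of f g] by simp
  moreover have "rs g = rs g ;; rs f" using e2 t rs_R3[of g f] by simp
  ultimately have "rs f = rs g" using t rs_comm[of f g] by simp
  thus ?thesis using e1 by simp
qed

lemma join_unique: assumes a1: "is_join C X Y I fs j1" and a2: "is_join C X Y I fs j2" shows "j1 = j2"
proof (rule rle_antisym)
  have l1: "\<forall>k. hom C X Y k \<and> (\<forall>i\<in>I. rle C (fs i) k) \<longrightarrow> rle C j1 k"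
    and u1: "hom C X Y j1 \<and> (\<forall>i\<in>I. rle C (fs i) j1)" using a1 unfolding is_join_def by simp_all
  have l2: "\<forall>k. hom C X Y k \<and> (\<forall>i\<in>I. rle C (fs i) k) \<longrightarrow> rle C j2 k"
    and u2: "hom C X Y j2 \<and> (\<forall>i\<in>I. rle C (fs i) j2)" using a2 unfolding is_join_def by simp_all
  show "rle C j1 j2" using l1 u2 by simp
  show "rle C j2 j1" using l2 u1 by simp
qed

definition bot where "bot X Y = (SOME j. is_join C X Y {} (\<lambda>_. idm X) j)"

lemma bot_join: "is_join C X Y {} (\<lambda>_. idm X) (bot X Y)"
proof -
  have "\<exists>j. is_join C X Y {} (\<lambda>_. idm X) j"
    by (rule CJ1) (simp_all add: pairwise_disjoint_def)
  thus ?thesis unfolding bot_def by (rule someI_ex)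
qed

lemma bot_ty[simp]: "dm (bot X Y) = X" "cd (bot X Y) = Y"
  using bot_join unfolding is_join_def hom_def by blast+

lemma bot_le: "dm g = X \<Longrightarrow> cd g = Y \<Longrightarrow> rs (bot X Y) ;; g = bot X Y"
  using bot_join[of X Y] unfolding is_join_def hom_def rle_def by blast

lemma join_empty_eq: "is_join C X Y {} fs j \<Longrightarrow> j = bot X Y"
proof -
  assume a: "is_join C X Y {} fs j"
  have "is_join C X Y {} (\<lambda>_. idm X) j" using a unfolding is_join_def by simp
  thus ?thesis using bot_join join_unique by blast
qed

lemma cp_bot: "dm h = X' \<Longrightarrow> cd h = X \<Longrightarrow> dm k = Y \<Longrightarrow> cd k = Y' \<Longrightarrow> (h ;; bot X Y) ;; k = bot X' Y'"
proof -
  assume a: "dm h = X'" "cd h = X" "dm k = Y" "cd k = Y'"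
  have "is_join C X' Y' {} (\<lambda>i. (h ;; (\<lambda>_. idm X) i) ;; k) ((h ;; bot X Y) ;; k)"
    using a by (intro CJ2[OF _ _ bot_join]) (simp_all add: pairwise_disjoint_def hom_def)
  thus ?thesis by (rule join_empty_eq)
qed

lemma cp_bot_l[simp]: "dm k = Y \<Longrightarrow> cd k = Y' \<Longrightarrow> bot X Y ;; k = bot X Y'"
  using cp_bot[of "idm X" X X k Y Y'] by simp
lemma cp_bot_r[simp]: "dm h = X' \<Longrightarrow> cd h = X \<Longrightarrow> h ;; bot X Y = bot X' Y"
  using cp_bot[of h X' X "idm Y" Y Y] by simp

lemma rs_bot[simp]: "rs (bot X Y) = bot X X"
proof -
  have b: "rs (bot X X) = bot X X" using bot_le[of "idm X" X X] by simp
  have "rs (bot X Y) = rs (bot X X ;; bot X Y)" by simp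
  also have "\<dots> = rs (rs (bot X X) ;; bot X Y)" by (simp only: b)
  also have "\<dots> = rs (bot X X) ;; rs (bot X Y)" by (rule rs_R3) simp
  also have "\<dots> = bot X X ;; rs (bot X Y)" by (simp only: b)
  also have "\<dots> = bot X X" by (rule cp_bot_l) simp_all
  finally show ?thesis .
qed

lemma nd_bot: "nowhere_defined C x \<Longrightarrow> x = bot (dm x) (cd x)"
proof -
  assume a: "nowhere_defined C x"
  have "rle C x (bot (dm x) (cd x))" using a unfolding nowhere_defined_def parallel_def by simp
  moreover have "rle C (bot (dm x) (cd x)) x" by (simp add: rle_iff bot_le)
  ultimately show ?thesis by (rule rle_antisym)
qed

lemma disj_of_bot: "dm f = X \<Longrightarrow> dm g = X \<Longrightarrow> cd f = Y \<Longrightarrow> cd g = Y \<Longrightarrow> rs f ;; rs g = bot X X \<Longrightarrow>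
  disjoint_maps C f g"
proof -
  assume a: "dm f = X" "dm g = X" "cd f = Y" "cd g = Y" and b: "rs f ;; rs g = bot X X"
  have "rs f ;; g = (rs f ;; rs g) ;; g" using a by simp
  also have "\<dots> = bot X Y" using a b by simp
  finally have e: "rs f ;; g = bot X Y" .
  show ?thesis unfolding disjoint_maps_def nowhere_defined_def e
    using a by (simp add: parallel_def rle_iff bot_le)
qed

definition rdisj :: "'o \<Rightarrow> (nat \<Rightarrow> 'm) \<Rightarrow> bool" where "rdisj X F \<longleftrightarrow> (\<forall>i j. i \<noteq> j \<longrightarrow> rs (F i) ;; rs (F j) = bot X X)"

lemma rdisj_pd: "rdisj X F \<Longrightarrow> (\<And>i. dm (F i) = X) \<Longrightarrow> (\<And>i. cd (F i) = Y) \<Longrightarrow> pairwise_disjoint C I F"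
  unfolding pairwise_disjoint_def rdisj_def proof (intro ballI impI)
  fix i j :: nat assume a: "\<forall>i j. i \<noteq> j \<longrightarrow> rs (F i) ;; rs (F j) = bot X X" "\<And>i. dm (F i) = X" "\<And>i. cd (F i) = Y" "i \<noteq> j"
  show "disjoint_maps C (F i) (F j)" using a by (intro disj_of_bot[of _ X _ Y]) simp_all
qed

lemma bot_sub: "sub x a \<Longrightarrow> sub y b \<Longrightarrow> dm x = X \<Longrightarrow> dm y = X \<Longrightarrow> dm a = X \<Longrightarrow> dm b = X \<Longrightarrow>
  rs a ;; rs b = bot X X \<Longrightarrow> rs x ;; rs y = bot X X"
proof -
  assume s: "sub x a" "sub y b" and a: "dm x = X" "dm y = X" "dm a = X" "dm b = X" and b: "rs a ;; rs b = bot X X"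
  have "rs x ;; rs y = (rs x ;; rs a) ;; (rs y ;; rs b)" using s by (simp add: sub_def)
  also have "\<dots> = rs x ;; (rs a ;; (rs y ;; rs b))" using a by simp
  also have "rs a ;; (rs y ;; rs b) = rs y ;; (rs a ;; rs b)" using a by (simp add: rs_lcomm)
  finally show ?thesis using a b by simp
qed

lemma rdisj_sub: "rdisj X F \<Longrightarrow> (\<And>i. sub (G i) (F i)) \<Longrightarrow> (\<And>i. dm (G i) = X) \<Longrightarrow> (\<And>i. dm (F i) = X) \<Longrightarrow> rdisj X G"
  unfolding rdisj_def proof (intro allI impI)
  fix i j :: nat assume a: "\<forall>i j. i \<noteq> j \<longrightarrow> rs (F i) ;; rs (F j) = bot X X" "i \<noteq> j"
    and s: "\<And>i. sub (G i) (F i)" and t: "\<And>i. dm (G i) = X" "\<And>i. dm (F i) = X"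
  show "rs (G i) ;; rs (G j) = bot X X" using a by (intro bot_sub[OF s s]) (simp_all add: t)
qed


lemma join_hom: "is_join C X Y I F J \<Longrightarrow> dm J = X \<and> cd J = Y"
  unfolding is_join_def hom_def by simp
lemma join_le: "is_join C X Y I F J \<Longrightarrow> i \<in> I \<Longrightarrow> rs (F i) ;; J = F i"
  unfolding is_join_def rle_def by simp
lemma join_least: "is_join C X Y I F J \<Longrightarrow> dm k = X \<Longrightarrow> cd k = Y \<Longrightarrow> (\<And>i. i \<in> I \<Longrightarrow> rle C (F i) k) \<Longrightarrow> rle C J k"
  unfolding is_join_def hom_def by simp
lemma join_ub: "is_join C X Y I F J \<Longrightarrow> i \<in> I \<Longrightarrow> rle C (F i) J"
  unfolding is_join_def by simp

lemma rdisj_rs: "rdisj X (\<lambda>i. rs (F i)) = rdisj X F" by (simp add: rdisj_def)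

lemma rs_join: assumes rd: "rdisj X G" and ty: "\<And>i. dm (G i) = X" "\<And>i. cd (G i) = Y"
  and K: "is_join C X Y UNIV G K"
  shows "is_join C X X UNIV (\<lambda>i. rs (G i)) (rs K)"
proof -
  have Kt: "dm K = X" "cd K = Y" using join_hom[OF K] by simp_all
  have pd: "pairwise_disjoint C UNIV (\<lambda>i. rs (G i))"
    by (rule rdisj_pd[of X]) (simp_all add: rdisj_rs rd ty)
  obtain L where L: "is_join C X X UNIV (\<lambda>i. rs (G i)) L"
    using CJ1[OF _ pd] ty unfolding hom_def by auto
  have Lt: "dm L = X" "cd L = X" using join_hom[OF L] by simp_all
  have "rle C L (idm X)" using L by (rule join_least) (simp_all add: rle_iff ty)
  hence Lr: "rs L = L" by (simp add: rle_iff Lt)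
  have GK: "\<And>i. rs (G i) ;; K = G i" using join_le[OF K] by simp
  have GL: "\<And>i. rs (G i) ;; rs L = rs (G i)"
  proof -
    fix i have "rs (rs (G i)) ;; L = rs (G i)" using join_le[OF L, of i] by simp
    thus "rs (G i) ;; rs L = rs (G i)" using Lr by simp
  qed
  have "rle C L (rs K)"
  proof (rule join_least[OF L])
    fix i
    have "rs (rs (G i)) ;; rs K = rs (rs (G i) ;; K)" using ty Kt by (simp add: rs_R3)
    thus "rle C (rs (G i)) (rs K)" using GK ty Kt by (simp add: rle_iff)
  qed (simp_all add: Kt)
  moreover have "rle C (rs K) L"
  proof -
    have "rle C K (rs L ;; K)"
    proof (rule join_least[OF K])
      fix i
      have "rs (G i) ;; (rs L ;; K) = (rs (G i) ;; rs L) ;; K" using ty Kt Lt by simp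
      also have "\<dots> = G i" using GL GK by simp
      finally show "rle C (G i) (rs L ;; K)" using ty Kt Lt by (simp add: rle_iff)
    qed (simp_all add: Kt Lt)
    hence e: "rs K ;; (rs L ;; K) = K" by (simp add: rle_iff)
    have "rs K = rs (rs K ;; (rs L ;; K))" using e by simp
    also have "\<dots> = rs K ;; (rs L ;; rs K)" using Kt Lt by (simp add: rs_R3)
    also have "\<dots> = rs L ;; (rs K ;; rs K)" using Kt Lt by (intro rs_lcomm) simp_all
    finally have e2: "rs K = rs L ;; rs K" by simp
    have "rs (rs K) ;; L = rs K" using e2 Lr Kt Lt rs_comm[of K L] by simp
    thus ?thesis using Kt Lt by (simp add: rle_iff)
  qed
  ultimately have "L = rs K" by (rule rle_antisym)
  thus ?thesis using L by simp
qed

lemma rdisj_cp_l: assumes rd: "rdisj X F" and ty: "\<And>i. dm (F i) = X" and h: "dm h = X'" "cd h = X"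
  shows "rdisj X' (\<lambda>i. h ;; F i)"
  unfolding rdisj_def proof (intro allI impI)
  fix i j :: nat assume ij: "i \<noteq> j"
  have "rs (h ;; F i) ;; rs (h ;; F j) = rs (h ;; rs (F i)) ;; rs (h ;; rs (F j))"
    using ty h by (simp add: rs_cp_rs)
  also have "\<dots> = rs ((h ;; rs (F i)) ;; rs (F j))" using ty h by (simp add: rs_meet)
  also have "(h ;; rs (F i)) ;; rs (F j) = h ;; bot X X"
    using ty h rd ij unfolding rdisj_def by simp
  finally show "rs (h ;; F i) ;; rs (h ;; F j) = bot X' X'" using h by simp
qed

lemma Rjoin: assumes rd: "rdisj X F" and ty: "\<And>i. dm (F i) = X" "\<And>i. cd (F i) = Y"
  and J: "is_join C X Y UNIV F J"
  shows "is_join C (pr X Y) X UNIV (\<lambda>i. RR (F i)) (RR J) \<and> rdisj (pr X Y) (\<lambda>i. RR (F i))"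
proof -
  have Jt: "dm J = X" "cd J = Y" using join_hom[OF J] by simp_all
  have pd: "pairwise_disjoint C UNIV F" by (rule rdisj_pd[of X]) (simp_all add: rd ty)
  have "is_join C (pr X Y) Y UNIV (\<lambda>i. (p0 X Y ;; F i) ;; idm Y) ((p0 X Y ;; J) ;; idm Y)"
    by (rule CJ2[OF _ pd J]) (simp_all add: hom_def ty)
  hence J0: "is_join C (pr X Y) Y UNIV (\<lambda>i. p0 X Y ;; F i) (p0 X Y ;; J)" using ty Jt by simp
  have rd0: "rdisj (pr X Y) (\<lambda>i. p0 X Y ;; F i)" by (rule rdisj_cp_l[OF rd]) (simp_all add: ty)
  have J1: "is_join C (pr X Y) (pr X Y) UNIV (\<lambda>i. rs (p0 X Y ;; F i)) (rs (p0 X Y ;; J))"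
    by (rule rs_join[OF rd0 _ _ J0]) (simp_all add: ty)
  have pd1: "pairwise_disjoint C UNIV (\<lambda>i. rs (p0 X Y ;; F i))"
    by (rule rdisj_pd[of "pr X Y"]) (simp_all add: rdisj_rs rd0 ty)
  have "is_join C (pr X Y) X UNIV (\<lambda>i. (idm (pr X Y) ;; rs (p0 X Y ;; F i)) ;; RR J)
         ((idm (pr X Y) ;; rs (p0 X Y ;; J)) ;; RR J)"
    by (rule CJ2[OF _ pd1 J1]) (simp_all add: hom_def ty Jt)
  moreover have "(\<lambda>i. (idm (pr X Y) ;; rs (p0 X Y ;; F i)) ;; RR J) = (\<lambda>i. RR (F i))"
  proof (rule ext)
    fix i
    have "RR (F i) = RR (rs (F i) ;; J)" using join_le[OF J, of i] by simp
    also have "\<dots> = rs (p0 X Y ;; F i) ;; RR J" using ty Jt by (subst R_rs_cp) simp_all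
    finally show "(idm (pr X Y) ;; rs (p0 X Y ;; F i)) ;; RR J = RR (F i)" using ty by simp
  qed
  moreover have "(idm (pr X Y) ;; rs (p0 X Y ;; J)) ;; RR J = RR J"
    using Jt by (simp add: rs_RR[symmetric])
  ultimately have j: "is_join C (pr X Y) X UNIV (\<lambda>i. RR (F i)) (RR J)" by simp
  have "rdisj (pr X Y) (\<lambda>i. RR (F i))"
    using rd0 ty by (simp add: rdisj_def rs_RR)
  with j show ?thesis by simp
qed


abbreviation mp where "mp \<equiv> mpow C"

lemma mp_ty: "dm m = X \<Longrightarrow> cd m = X \<Longrightarrow> dm (mp X m i) = X \<and> cd (mp X m i) = X"
  by (induction i) simp_all

lemma mp_add: "dm m = X \<Longrightarrow> cd m = X \<Longrightarrow> mp X m (i + n) = mp X m i ;; mp X m n"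
proof (induction i)
  case 0 thus ?case using mp_ty[of m X n] by simp
next
  case (Suc i) thus ?case using mp_ty[of m X n] mp_ty[of m X i] by simp
qed

lemma fam_core: assumes t: "dm m = X" "cd m = X" "dm a = X" "dm c = X" and b: "rs a ;; rs c = bot X X"
  and ij: "i < j"
  shows "rs (mp X (rs a ;; m) i ;; rs c) ;; rs (mp X (rs a ;; m) j ;; rs c) = bot X X"
proof -
  let ?m = "rs a ;; m"
  have mt: "dm ?m = X" "cd ?m = X" using t by simp_all
  obtain d where j: "j = i + Suc d" using ij less_iff_Suc_add by auto
  let ?x = "mp X ?m i" and ?V = "m ;; (mp X ?m d ;; rs c)"
  have xt: "dm ?x = X" "cd ?x = X" using mp_ty[OF mt] by simp_all
  have dt: "dm (mp X ?m d) = X" "cd (mp X ?m d) = X" using mp_ty[OF mt] by simp_all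
  have Vt: "dm ?V = X" "cd ?V = X" using dt t by simp_all
  have "mp X ?m j ;; rs c = ?x ;; (rs a ;; ?V)"
    unfolding j using t mt xt dt by (subst mp_add[OF mt]) simp_all
  hence "rs (mp X ?m j ;; rs c) = rs (?x ;; rs (rs a ;; ?V))" using xt Vt t by (simp add: rs_cp_rs)
  hence "rs (?x ;; rs c) ;; rs (mp X ?m j ;; rs c) = rs ((?x ;; rs c) ;; rs (rs a ;; ?V))"
    using xt Vt t by (simp add: rs_meet)
  also have "(?x ;; rs c) ;; rs (rs a ;; ?V) = ?x ;; ((rs c ;; rs a) ;; rs ?V)"
    using xt Vt t by (simp add: rs_R3)
  also have "rs c ;; rs a = bot X X" using b t rs_comm[of c a] by simp
  finally show ?thesis using xt Vt by simp
qed

lemma fam_disj: assumes t: "dm m = X" "cd m = X" "dm a = X" "dm c = X" and b: "rs a ;; rs c = bot X X"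
  shows "rdisj X (\<lambda>i. mp X (rs a ;; m) i ;; rs c)"
  unfolding rdisj_def proof (intro allI impI)
  fix i j :: nat assume "i \<noteq> j"
  hence "i < j \<or> j < i" by arith
  thus "rs (mp X (rs a ;; m) i ;; rs c) ;; rs (mp X (rs a ;; m) j ;; rs c) = bot X X"
  proof
    assume "i < j" thus ?thesis by (rule fam_core[OF t b])
  next
    assume "j < i"
    hence e: "rs (mp X (rs a ;; m) j ;; rs c) ;; rs (mp X (rs a ;; m) i ;; rs c) = bot X X" by (rule fam_core[OF t b])
    have "dm (rs a ;; m) = X" "cd (rs a ;; m) = X" using t by simp_all
    hence "dm (mp X (rs a ;; m) i ;; rs c) = dm (mp X (rs a ;; m) j ;; rs c)"
      using mp_ty t by simp
    thus ?thesis using e rs_comm by metis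
  qed
qed

end

context RD begin

lemma Base: "dm c = A \<Longrightarrow>
  fp (io0 A A) (idm A) ;; (RR (rs (p0 A A ;; c) ;; p1 A A) ;; p1 A A) = RR (rs c)"
proof -
  assume a: "dm c = A"
  let ?E = "p0 (pr A A) A ;; (p0 A A ;; c)" and ?Q = "fp (io0 A A) (idm A)"
  have "RR (rs (p0 A A ;; c) ;; p1 A A) = rs ?E ;; RR (p1 A A)"
    using a by (subst R_rs_cp) simp_all
  hence "?Q ;; (RR (rs (p0 A A ;; c) ;; p1 A A) ;; p1 A A) = ?Q ;; (rs ?E ;; p1 (pr A A) A)"
    using a by simp
  also have "\<dots> = rs (?Q ;; ?E) ;; (?Q ;; p1 (pr A A) A)"
    using a by (subst rs_R4_c) simp_all
  also have "?Q ;; p1 (pr A A) A = p1 A A" by (simp add: fp_p1_tot)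
  also have "?Q ;; ?E = p0 A A ;; c" using a by (simp add: fp_p0_tot_c)
  also have "rs (p0 A A ;; c) ;; p1 A A = RR (rs c)"
    using a by (simp add: RD9 fp_rs_id)
  finally show ?thesis .
qed

lemma Ind: assumes t: "dm f = A" "cd f = A" "dm bT = A" "dm bF = A"
  shows "(fp (io0 A A) (idm A) ;; RR (mp (pr A A) (rs (p0 A A ;; bT) ;; tanT C A f) i ;; rs (p0 A A ;; bF) ;; p1 A A)) ;; p1 A A
     = RR (mp A (rs bT ;; f) i ;; rs bF)"
proof (induction i)
  case 0 thus ?case using Base[of bF A] t by simp
next
  case (Suc i)
  let ?k = "rs (p0 A A ;; bT) ;; tanT C A f" and ?h = "rs bT ;; f"
  have kt: "dm ?k = pr A A" "cd ?k = pr A A" using t by (simp_all add: tanT_eq)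
  have ht: "dm ?h = A" "cd ?h = A" using t by simp_all
  have m1: "dm (mp (pr A A) ?k i) = pr A A" "cd (mp (pr A A) ?k i) = pr A A" using mp_ty[OF kt] by simp_all
  have m2: "dm (mp A ?h i) = A" "cd (mp A ?h i) = A" using mp_ty[OF ht] by simp_all
  have IH: "fp (io0 A A) (idm A) ;; (RR (mp (pr A A) ?k i ;; (rs (p0 A A ;; bF) ;; p1 A A)) ;; p1 A A)
     = RR (mp A ?h i ;; rs bF)" using Suc t m1 m2 by simp
  have S: "fp (io0 A A) (idm A) ;; (RR (?k ;; (mp (pr A A) ?k i ;; (rs (p0 A A ;; bF) ;; p1 A A))) ;; p1 A A)
     = RR (?h ;; (mp A ?h i ;; rs bF))"
    using Step[OF t(1,2,3) _ _ _ _ IH] t m1 m2 by simp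
  show ?case using S t m1 m2 kt ht by simp
qed


lemma main:
  assumes hf: "hom C A A f"
    and hbT: "hom C A (c_one C) bT"
    and hbF: "hom C A (c_one C) bF"
    and disj: "nowhere_defined C (c_cmp C (c_rst C bT) (c_rst C bF))"
    and hW: "is_join C A A UNIV
               (\<lambda>i. c_cmp C (mpow C A (c_cmp C (c_rst C bT) f) i) (c_rst C bF)) W"
    and hW': "is_join C (c_prod C A A) (c_prod C A A) UNIV
               (\<lambda>i. c_cmp C
                      (mpow C (c_prod C A A)
                         (c_cmp C (c_rst C (c_cmp C (c_pi0 C A A) bT)) (tanT C A f)) i)
                      (c_rst C (c_cmp C (c_pi0 C A A) bF))) W'"
  shows "c_R C W =
           c_cmp C (c_cmp C (fprod C (iota0 C A A) (c_id C A))
                            (c_R C (c_cmp C W' (c_pi1 C A A))))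
                   (c_pi1 C A A)"
proof -
  have t: "dm f = A" "cd f = A" "dm bT = A" "dm bF = A" using hf hbT hbF unfolding hom_def by simp_all
  let ?h = "rs bT ;; f" and ?k = "rs (p0 A A ;; bT) ;; tanT C A f"
  let ?g = "\<lambda>i. mp A ?h i ;; rs bF"
  let ?F = "\<lambda>i. mp (pr A A) ?k i ;; rs (p0 A A ;; bF)"
  let ?Q = "fp (io0 A A) (idm A)"
  have kt: "dm ?k = pr A A" "cd ?k = pr A A" using t by (simp_all add: tanT_eq)
  have ht: "dm ?h = A" "cd ?h = A" using t by simp_all
  have gt: "\<And>i. dm (?g i) = A" "\<And>i. cd (?g i) = A" using mp_ty[OF ht] t by simp_all
  have Ft: "\<And>i. dm (?F i) = pr A A" "\<And>i. cd (?F i) = pr A A" using mp_ty[OF kt] t by simp_all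
  have b: "rs bT ;; rs bF = bot A A" using nd_bot[OF disj] t by simp
  have rdg: "rdisj A ?g" by (rule fam_disj) (simp_all add: t b)
  have R1: "is_join C (pr A A) A UNIV (\<lambda>i. RR (?g i)) (RR W)"
    using Rjoin[OF rdg gt hW] by simp
  have b2: "rs (p0 A A ;; bT) ;; rs (p0 A A ;; bF) = bot (pr A A) (pr A A)"
  proof -
    have "rs (p0 A A ;; bT) ;; rs (p0 A A ;; bF) = rs (p0 A A ;; rs bT) ;; rs (p0 A A ;; rs bF)"
      using t by (simp add: rs_cp_rs)
    also have "\<dots> = rs ((p0 A A ;; rs bT) ;; rs bF)" using t by (simp add: rs_meet)
    also have "(p0 A A ;; rs bT) ;; rs bF = p0 A A ;; bot A A" using t b by simp
    finally show ?thesis by simp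
  qed
  have rdF: "rdisj (pr A A) ?F"
    by (rule fam_disj) (simp_all add: t b2 tanT_eq)
  have pdF: "pairwise_disjoint C UNIV ?F" by (rule rdisj_pd[of "pr A A"]) (simp_all add: rdF Ft)
  have "is_join C (pr A A) A UNIV (\<lambda>i. (idm (pr A A) ;; ?F i) ;; p1 A A) ((idm (pr A A) ;; W') ;; p1 A A)"
    by (rule CJ2[OF _ pdF hW']) (simp_all add: hom_def Ft)
  moreover have "dm W' = pr A A" "cd W' = pr A A" using join_hom[OF hW'] by simp_all
  ultimately have J1: "is_join C (pr A A) A UNIV (\<lambda>i. ?F i ;; p1 A A) (W' ;; p1 A A)"
    using Ft by simp
  have rd1: "rdisj (pr A A) (\<lambda>i. ?F i ;; p1 A A)"
    by (rule rdisj_sub[OF rdF]) (simp_all add: Ft sub_cp)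
  have R2: "is_join C (pr (pr A A) A) (pr A A) UNIV (\<lambda>i. RR (?F i ;; p1 A A)) (RR (W' ;; p1 A A))
     \<and> rdisj (pr (pr A A) A) (\<lambda>i. RR (?F i ;; p1 A A))"
    by (rule Rjoin[OF rd1 _ _ J1]) (simp_all add: Ft)
  have pd2: "pairwise_disjoint C UNIV (\<lambda>i. RR (?F i ;; p1 A A))"
    by (rule rdisj_pd[of "pr (pr A A) A"]) (simp_all add: R2 Ft)
  have R3: "is_join C (pr A A) A UNIV (\<lambda>i. (?Q ;; RR (?F i ;; p1 A A)) ;; p1 A A)
      ((?Q ;; RR (W' ;; p1 A A)) ;; p1 A A)"
    by (rule CJ2[OF _ pd2 conjunct1[OF R2]]) (simp_all add: hom_def Ft)
  have eq: "(\<lambda>i. (?Q ;; RR (?F i ;; p1 A A)) ;; p1 A A) = (\<lambda>i. RR (?g i))"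
  proof (rule ext)
    fix i
    show "(?Q ;; RR (?F i ;; p1 A A)) ;; p1 A A = RR (?g i)"
      using Ind[OF t, of i] mp_ty[OF kt, of i] t by simp
  qed
  have "RR W = (?Q ;; RR (W' ;; p1 A A)) ;; p1 A A"
    using R1 R3 unfolding eq by (rule join_unique)
  thus ?thesis by simp
qed

end

theorem mainTheorem6:
  fixes C :: "('o, 'm) rcat" and A :: 'o and f bT bF W W' :: 'm
  assumes rdrc: "is_rdrc C"
    and joins: "has_countable_disjoint_joins C"
    and hf: "hom C A A f"
    and hbT: "hom C A (c_one C) bT"
    and hbF: "hom C A (c_one C) bF"
    and disj: "nowhere_defined C (c_cmp C (c_rst C bT) (c_rst C bF))"
    and hW: "is_join C A A UNIV
               (\<lambda>i. c_cmp C (mpow C A (c_cmp C (c_rst C bT) f) i) (c_rst C bF)) W"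
    and hW': "is_join C (c_prod C A A) (c_prod C A A) UNIV
               (\<lambda>i. c_cmp C
                      (mpow C (c_prod C A A)
                         (c_cmp C (c_rst C (c_cmp C (c_pi0 C A A) bT)) (tanT C A f)) i)
                      (c_rst C (c_cmp C (c_pi0 C A A) bF))) W'"
  shows "c_R C W =
           c_cmp C (c_cmp C (fprod C (iota0 C A A) (c_id C A))
                            (c_R C (c_cmp C W' (c_pi1 C A A))))
                   (c_pi1 C A A)"
  proof -
  interpret RD C by (rule RD.intro[OF rdrc joins])
  show ?thesis by (rule main[OF hf hbT hbF disj hW hW'])
qed

end
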